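(* Let $(V,[\cdot,\dots,\cdot],\langle\cdot,\cdot\rangle)$ be a nonzero finite-dimensional indecomposable metric Lie $n$-algebra ($n\ge 2$) which is neither simple nor one-dimensional. Then $V$ possesses a minimal ideal $I$ with $0\neq I\neq V$, and every such minimal ideal satisfies: $I$ is isotropic ($I\subset I^\perp$); $[I,I,V,\dots,V]=0$; $I^\perp$ is a maximal ideal, so that $U:=V/I^\perp$ is simple or one-dimensional; $I^\perp/I$ is a metric Lie $n$-algebra; the inner product induces a nondegenerate pairing $U\otimes I\to\mathbb{R}$, $(u+I^\perp,w)\mapsto\langle u,w\rangle$, so $\dim I=\dim U=:r$; and if $I^\perp/I$ has signature $(p,q)$ then $V$ has signature $(p+r,q+r)$. In particular, if $V$ is lorentzian then $r=1$ and $I^\perp/I$ is euclidean.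
   Context: All vector spaces are real and finite-dimensional. A Lie $n$-algebra is a vector space $V$ with an alternating $n$-linear map $[\cdot,\dots,\cdot]:\Lambda^nV\to V$ such that each $\mathrm{ad}_{x_1,\dots,x_{n-1}}:y\mapsto[x_1,\dots,x_{n-1},y]$ is a derivation of the bracket. An ideal is a subspace $I$ with $[I,V,\dots,V]\subset I$; a minimal ideal is a nonzero ideal containing no ideals other than $0$ and itself; a maximal ideal is an ideal $\neq V$ contained in no ideal other than itself and $V$. A Lie $n$-algebra is simple if it is not one-dimensional and its only ideals are $0$ and itself. A metric Lie $n$-algebra has a nondegenerate symmetric bilinear form $\langle\cdot,\cdot\rangle$ for which every $\mathrm{ad}$ map is skew-symmetric; it is indecomposable if it has no nondegenerate ideal other than $0$ and $V$; lorentzian means the form has exactly one negative eigenvalue; euclidean means positive definite. $W^\perp=\{v:\langle v,w\rangle=0\ \forall w\in W\}$. *)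

theory Defs
  imports "HOL-Analysis.Analysis"
begin

text \<open>A Lie n-algebra structure on a (whole) real vector space type 'v.
  The n-ary bracket is a map br taking a family x of arguments indexed by nat;
  only the arguments x 0, ..., x (n-1) matter.\<close>

definition fin_dim_space :: "'v::real_vector itself \<Rightarrow> bool" where
  "fin_dim_space _ \<longleftrightarrow> (\<exists>S::'v set. finite S \<and> span S = UNIV)"

definition nbracket :: "nat \<Rightarrow> ((nat \<Rightarrow> 'v::real_vector) \<Rightarrow> 'v) \<Rightarrow> bool" where
  "nbracket n br \<longleftrightarrow>
     (\<forall>x y. (\<forall>i<n. x i = y i) \<longrightarrow> br x = br y) \<and>
     (\<forall>x. \<forall>i<n. linear (\<lambda>v. br (x(i := v)))) \<and>
     (\<forall>x i j. i < n \<and> j < n \<and> i \<noteq> j \<and> x i = x j \<longrightarrow> br x = 0)"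

definition ad :: "nat \<Rightarrow> ((nat \<Rightarrow> 'v::real_vector) \<Rightarrow> 'v) \<Rightarrow> (nat \<Rightarrow> 'v) \<Rightarrow> 'v \<Rightarrow> 'v" where
  "ad n br x y = br (x(n - 1 := y))"

definition lie_nalg :: "nat \<Rightarrow> ((nat \<Rightarrow> 'v::real_vector) \<Rightarrow> 'v) \<Rightarrow> bool" where
  "lie_nalg n br \<longleftrightarrow> nbracket n br \<and>
     (\<forall>x y. ad n br x (br y) = (\<Sum>i<n. br (y(i := ad n br x (y i)))))"

definition lie_ideal :: "nat \<Rightarrow> ((nat \<Rightarrow> 'v::real_vector) \<Rightarrow> 'v) \<Rightarrow> 'v set \<Rightarrow> bool" where
  "lie_ideal n br I \<longleftrightarrow> subspace I \<and> (\<forall>x. x 0 \<in> I \<longrightarrow> br x \<in> I)"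

definition minimal_ideal :: "nat \<Rightarrow> ((nat \<Rightarrow> 'v::real_vector) \<Rightarrow> 'v) \<Rightarrow> 'v set \<Rightarrow> bool" where
  "minimal_ideal n br I \<longleftrightarrow> lie_ideal n br I \<and> I \<noteq> {0} \<and>
     (\<forall>J. lie_ideal n br J \<and> J \<subseteq> I \<longrightarrow> J = {0} \<or> J = I)"

definition maximal_ideal :: "nat \<Rightarrow> ((nat \<Rightarrow> 'v::real_vector) \<Rightarrow> 'v) \<Rightarrow> 'v set \<Rightarrow> bool" where
  "maximal_ideal n br I \<longleftrightarrow> lie_ideal n br I \<and> I \<noteq> UNIV \<and>
     (\<forall>J. lie_ideal n br J \<and> I \<subseteq> J \<longrightarrow> J = I \<or> J = UNIV)"

definition one_dim :: "'v::real_vector itself \<Rightarrow> bool" where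
  "one_dim _ \<longleftrightarrow> dim (UNIV::'v set) = 1"

definition simple_nalg :: "nat \<Rightarrow> ((nat \<Rightarrow> 'v::real_vector) \<Rightarrow> 'v) \<Rightarrow> bool" where
  "simple_nalg n br \<longleftrightarrow> \<not> one_dim TYPE('v) \<and>
     (\<forall>I. lie_ideal n br I \<longrightarrow> I = {0} \<or> I = UNIV)"

definition perp :: "('v::real_vector \<Rightarrow> 'v \<Rightarrow> real) \<Rightarrow> 'v set \<Rightarrow> 'v set" where
  "perp B W = {v. \<forall>w\<in>W. B v w = 0}"

definition metric_form :: "('v::real_vector \<Rightarrow> 'v \<Rightarrow> real) \<Rightarrow> bool" where
  "metric_form B \<longleftrightarrow> (\<forall>x y. B x y = B y x) \<and> (\<forall>x. linear (B x)) \<and>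
     (\<forall>x. (\<forall>y. B x y = 0) \<longrightarrow> x = 0)"

definition metric_lie_nalg ::
  "nat \<Rightarrow> ((nat \<Rightarrow> 'v::real_vector) \<Rightarrow> 'v) \<Rightarrow> ('v \<Rightarrow> 'v \<Rightarrow> real) \<Rightarrow> bool" where
  "metric_lie_nalg n br B \<longleftrightarrow> lie_nalg n br \<and> metric_form B \<and>
     (\<forall>x y z. B (ad n br x y) z = - B y (ad n br x z))"

definition nondegenerate_on :: "('v::real_vector \<Rightarrow> 'v \<Rightarrow> real) \<Rightarrow> 'v set \<Rightarrow> bool" where
  "nondegenerate_on B W \<longleftrightarrow> (\<forall>x\<in>W. (\<forall>y\<in>W. B x y = 0) \<longrightarrow> x = 0)"

definition indecomposable ::
  "nat \<Rightarrow> ((nat \<Rightarrow> 'v::real_vector) \<Rightarrow> 'v) \<Rightarrow> ('v \<Rightarrow> 'v \<Rightarrow> real) \<Rightarrow> bool" where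
  "indecomposable n br B \<longleftrightarrow>
     (\<forall>I. lie_ideal n br I \<and> nondegenerate_on B I \<longrightarrow> I = {0} \<or> I = UNIV)"

text \<open>Signature (p,q) of a symmetric bilinear form on the whole space, via a
  B-orthogonal basis (diagonalisation of the Gram matrix): p diagonal entries
  positive, q negative.\<close>
definition has_signature :: "('v::real_vector \<Rightarrow> 'v \<Rightarrow> real) \<Rightarrow> nat \<Rightarrow> nat \<Rightarrow> bool" where
  "has_signature B p q \<longleftrightarrow> (\<exists>b. finite b \<and> independent b \<and> span b = UNIV \<and>
     (\<forall>x\<in>b. \<forall>y\<in>b. x \<noteq> y \<longrightarrow> B x y = 0) \<and>
     card {x\<in>b. B x x > 0} = p \<and> card {x\<in>b. B x x < 0} = q)"

definition lorentzian :: "('v::real_vector \<Rightarrow> 'v \<Rightarrow> real) \<Rightarrow> bool" where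
  "lorentzian B \<longleftrightarrow> (\<exists>p. has_signature B p 1)"

definition euclidean_form :: "('v::real_vector \<Rightarrow> 'v \<Rightarrow> real) \<Rightarrow> bool" where
  "euclidean_form B \<longleftrightarrow> (\<forall>x. x \<noteq> 0 \<longrightarrow> B x x > 0)"

end

theory Submission
  imports Defs
begin

locale bf =
  fixes B :: "'v::real_vector \<Rightarrow> 'v \<Rightarrow> real" and Bs :: "'v set"
  assumes finB: "finite Bs" and indB: "independent Bs" and spanB: "span Bs = UNIV"
    and mf: "metric_form B"
begin

sublocale fd: finite_dimensional_vector_space "scaleR :: real \<Rightarrow> 'v \<Rightarrow> 'v" Bs
  rewrites "module.dependent (*\<^sub>R) = dependent"
    and "module.representation (*\<^sub>R) = representation"
    and "module.subspace (*\<^sub>R) = subspace"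
    and "module.span (*\<^sub>R) = span"
    and "vector_space.extend_basis (*\<^sub>R) = extend_basis"
    and "vector_space.dim (*\<^sub>R) = dim"
    and "Vector_Spaces.linear (*\<^sub>R) (*\<^sub>R) = linear"
    and "Vector_Spaces.linear (*) (*\<^sub>R) = linear"
  apply unfold_locales
  using finB indB spanB by (auto simp add: dependent_raw_def representation_raw_def
      subspace_raw_def span_raw_def extend_basis_raw_def dim_raw_def linear_def
      real_scaleR_def[abs_def])

lemma Bsym: "B x y = B y x" using mf unfolding metric_form_def by auto
lemma Blin: "linear (B x)" using mf unfolding metric_form_def by auto
lemma Blin1: "linear (\<lambda>x. B x y)"
proof -
  have "(\<lambda>x. B x y) = B y" by (rule ext) (rule Bsym)
  then show ?thesis using Blin by simp
qed
lemma Bnd: "(\<And>y. B x y = 0) \<Longrightarrow> x = 0" using mf unfolding metric_form_def by auto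

lemma Badd2[simp]: "B x (y + z) = B x y + B x z" using linear_add[OF Blin] .
lemma Bscale2[simp]: "B x (c *\<^sub>R y) = c * B x y" using linear_scale[OF Blin] by simp
lemma Bdiff2[simp]: "B x (y - z) = B x y - B x z" using linear_diff[OF Blin] .
lemma Bneg2[simp]: "B x (- y) = - B x y" using linear_neg[OF Blin] .
lemma Bzero2[simp]: "B x 0 = 0" using linear_0[OF Blin] .
lemma Bsum2: "B x (\<Sum>i\<in>S. f i) = (\<Sum>i\<in>S. B x (f i))" using linear_sum[OF Blin] .
lemma Badd1[simp]: "B (y + z) x = B y x + B z x" by (simp add: Bsym[of _ x])
lemma Bscale1[simp]: "B (c *\<^sub>R y) x = c * B y x" by (simp add: Bsym[of _ x])
lemma Bdiff1[simp]: "B (y - z) x = B y x - B z x" by (simp add: Bsym[of _ x])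
lemma Bneg1[simp]: "B (- y) x = - B y x" by (simp add: Bsym[of _ x])
lemma Bzero1[simp]: "B 0 x = 0" by (simp add: Bsym[of _ x])
lemma Bsum1: "B (\<Sum>i\<in>S. f i) x = (\<Sum>i\<in>S. B (f i) x)" by (simp add: Bsym[of _ x] Bsum2)

lemma indep_coef_zero:
  fixes C :: "'a::real_vector set"
  assumes "finite C" "independent C" "(\<Sum>c\<in>C. a c *\<^sub>R c) = 0" "c \<in> C"
  shows "a c = 0"
  using assms dependent_finite[of C] by auto

lemma linear_zero_span:
  fixes f :: "'a::real_vector \<Rightarrow> 'b::real_vector"
  assumes "linear f" "\<And>x. x \<in> C \<Longrightarrow> f x = 0" "x \<in> span C"
  shows "f x = 0"
  using linear_eq_0_on_span[OF assms] .

lemma riesz: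
  assumes g: "linear g" shows "\<exists>v. \<forall>x. B v x = g x"
proof -
  define Psi where "Psi v = (\<Sum>c\<in>Bs. B v c *\<^sub>R c)" for v
  have lin: "linear Psi"
    by (rule linearI) (auto simp: Psi_def scaleR_add_left sum.distrib scaleR_sum_right)
  have inj: "inj Psi"
  proof (rule linear_inj_on_iff_eq_0[OF lin subspace_UNIV, THEN iffD2], intro ballI impI)
    fix v assume "Psi v = 0"
    then have "\<forall>c\<in>Bs. B v c = 0" using indep_coef_zero[OF finB indB] unfolding Psi_def by blast
    then have "\<forall>x. B v x = 0" using linear_zero_span[OF Blin, of Bs v] spanB by auto
    then show "v = 0" using Bnd by blast
  qed
  have "surj Psi" using fd.linear_inj_imp_surj[OF lin inj] .
  then obtain v where v: "Psi v = (\<Sum>c\<in>Bs. g c *\<^sub>R c)" by (metis surjD)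
  then have "(\<Sum>c\<in>Bs. (B v c - g c) *\<^sub>R c) = 0"
    unfolding Psi_def by (simp add: scaleR_diff_left sum_subtractf)
  then have "\<forall>c\<in>Bs. B v c = g c" using indep_coef_zero[OF finB indB] by fastforce
  then have "\<forall>x. B v x = g x"
    using linear_eq_on_span[OF Blin g, of Bs] spanB by auto
  then show ?thesis by blast
qed

lemma interp:
  assumes "independent X" shows "\<exists>v. \<forall>x\<in>X. B v x = t x"
proof -
  obtain g :: "'v \<Rightarrow> real" where "linear g" "\<forall>x\<in>X. g x = t x"
    using linear_independent_extend[OF assms] by fastforce
  then show ?thesis using riesz by metis
qed

lemma rank_nullity:
  fixes f :: "'v \<Rightarrow> 'b::real_vector"
  assumes f: "linear f" and S: "subspace S"
  shows "dim S = dim {x\<in>S. f x = 0} + dim (f ` S)"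
proof -
  define K where "K = {x\<in>S. f x = 0}"
  have K: "subspace K" unfolding K_def
    using subspace_inter[OF S linear_subspace_kernel[OF f]] by (simp add: Int_def)
  obtain Bk where Bk: "Bk \<subseteq> K" "independent Bk" "K \<subseteq> span Bk" "card Bk = dim K"
    using basis_exists by blast
  have "Bk \<subseteq> S" using Bk(1) K_def by auto
  then obtain C where C: "Bk \<subseteq> C" "C \<subseteq> S" "independent C" "S \<subseteq> span C"
    using maximal_independent_subset_extend[OF _ Bk(2)] by blast
  have finC: "finite C" using fd.finiteI_independent[OF C(3)] .
  define D where "D = C - Bk"
  have indD: "independent D" using C(3) unfolding D_def by (metis Diff_subset independent_mono)
  have cardC: "card C = dim S" using basis_card_eq_dim[OF C(2) C(4) C(3)] .
  have cardCD: "card C = card Bk + card D" unfolding D_def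
    using finC C(1) by (metis card_Diff_subset finite_subset le_add_diff_inverse card_mono)
  have dD: "dim (span D) = card D" using dim_span_eq_card_independent[OF indD] .
  have "D \<subseteq> S" using C(2) D_def by auto
  then have spanD_S: "span D \<subseteq> S" using span_minimal[OF _ S] by blast
  have spanBk: "span Bk \<subseteq> K" using span_minimal[OF Bk(1) K] .
  have decomp: "S \<subseteq> {x + y | x y. x \<in> K \<and> y \<in> span D}"
  proof
    fix s assume "s \<in> S"
    then have "s \<in> span (Bk \<union> D)" using C(4) C(1) D_def by (metis Diff_partition subsetD)
    then show "s \<in> {x + y | x y. x \<in> K \<and> y \<in> span D}"
      unfolding span_Un using spanBk by blast
  qed
  have "dim {x + y | x y. x \<in> K \<and> y \<in> span D} + dim (K \<inter> span D) = dim K + dim (span D)"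
    using fd.dim_sums_Int[OF K subspace_span] .
  moreover have "dim S \<le> dim {x + y | x y. x \<in> K \<and> y \<in> span D}"
    using fd.dim_subset[OF decomp] .
  ultimately have "dim (K \<inter> span D) = 0" using cardC cardCD dD Bk(4) by linarith
  then have KD: "K \<inter> span D \<subseteq> {0}" by simp
  have injD: "inj_on f (span D)"
  proof (rule linear_inj_on_iff_eq_0[OF f subspace_span, THEN iffD2], intro ballI impI)
    fix x assume "x \<in> span D" "f x = 0"
    then have "x \<in> K \<inter> span D" using spanD_S K_def by auto
    then show "x = 0" using KD by auto
  qed
  have img: "f ` S = f ` span D"
  proof
    show "f ` span D \<subseteq> f ` S" using spanD_S by auto
    show "f ` S \<subseteq> f ` span D"
    proof
      fix z assume "z \<in> f ` S"
      then obtain s where s: "s \<in> S" "z = f s" by auto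
      then obtain k d where kd: "s = k + d" "k \<in> K" "d \<in> span D" using decomp by blast
      have "f k = 0" using kd(2) K_def by auto
      then have "z = f d" using s kd linear_add[OF f] by simp
      then show "z \<in> f ` span D" using kd by auto
    qed
  qed
  have "f ` span D = span (f ` D)" using linear_span_image[OF f] by simp
  moreover have "independent (f ` D)"
    using linear_independent_injective_image[OF f indD injD] .
  moreover have "card (f ` D) = card D"
    using card_image[OF inj_on_subset[OF injD span_superset]] .
  ultimately have "dim (f ` S) = card D" using img dim_span_eq_card_independent by metis
  then show ?thesis using cardC cardCD Bk(4) K_def by simp
qed


lemma perp_subspace: "subspace (perp B W)"
  unfolding perp_def subspace_def by auto

lemma dim_perp:
  assumes W: "subspace W" shows "dim W + dim (perp B W) = dim (UNIV::'v set)"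
proof -
  obtain Wb where Wb: "Wb \<subseteq> W" "independent Wb" "W \<subseteq> span Wb" "card Wb = dim W"
    using basis_exists by blast
  have finW: "finite Wb" using fd.finiteI_independent[OF Wb(2)] .
  define phi where "phi v = (\<Sum>w\<in>Wb. B v w *\<^sub>R w)" for v
  have lin: "linear phi"
    by (rule linearI) (auto simp: phi_def scaleR_add_left sum.distrib scaleR_sum_right)
  have kerx: "phi x = 0 \<longleftrightarrow> x \<in> perp B W" for x
  proof
    assume "phi x = 0"
    then have "\<forall>w\<in>Wb. B x w = 0" using indep_coef_zero[OF finW Wb(2)] unfolding phi_def by blast
    then show "x \<in> perp B W" unfolding perp_def using linear_zero_span[OF Blin, of Wb] Wb(3) by blast
  next
    assume "x \<in> perp B W"
    then have "\<forall>w\<in>Wb. B x w = 0" using Wb(1) unfolding perp_def by auto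
    then show "phi x = 0" unfolding phi_def by simp
  qed
  then have ker: "{x\<in>UNIV. phi x = 0} = perp B W" by auto
  have "phi x \<in> span Wb" for x unfolding phi_def
    by (rule span_sum) (rule span_scale, rule span_base, assumption)
  then have img1: "phi ` UNIV \<subseteq> span Wb" by auto
  have "Wb \<subseteq> phi ` UNIV"
  proof
    fix w0 assume w0: "w0 \<in> Wb"
    obtain v where v: "\<forall>w\<in>Wb. B v w = (if w = w0 then 1 else 0)"
      using interp[OF Wb(2), of "\<lambda>w. if w = w0 then 1 else 0"] by blast
    have "phi v = (\<Sum>w\<in>Wb. if w = w0 then w else 0)"
      unfolding phi_def by (rule sum.cong) (auto simp: v)
    also have "\<dots> = w0" using w0 finW by (simp add: sum.delta)
    finally show "w0 \<in> phi ` UNIV" by (metis rangeI)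
  qed
  then have "span Wb \<subseteq> phi ` UNIV"
    using span_minimal linear_subspace_image[OF lin subspace_UNIV] by blast
  then have img: "phi ` UNIV = span Wb" using img1 by blast
  have "dim (UNIV::'v set) = dim {x\<in>UNIV. phi x = 0} + dim (phi ` UNIV)"
    using rank_nullity[OF lin subspace_UNIV] .
  then show ?thesis using ker img dim_span_eq_card_independent[OF Wb(2)] Wb(4) by simp
qed

lemma perp_perp:
  assumes W: "subspace W" shows "perp B (perp B W) = W"
proof -
  have sub: "W \<subseteq> perp B (perp B W)" unfolding perp_def by (auto simp: Bsym)
  have "dim (perp B W) + dim (perp B (perp B W)) = dim (UNIV::'v set)"
    using dim_perp[OF perp_subspace] .
  moreover have "dim W + dim (perp B W) = dim (UNIV::'v set)" using dim_perp[OF W] .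
  ultimately show ?thesis
    using fd.subspace_dim_equal[OF W perp_subspace sub] by simp
qed

lemma perp_UNIV: "perp B UNIV = {0}"
  unfolding perp_def using Bnd by auto

lemma perp_zero: "perp B {0} = UNIV"
  unfolding perp_def by auto

lemma perp_anti: "V \<subseteq> W \<Longrightarrow> perp B W \<subseteq> perp B V"
  unfolding perp_def by auto

end

locale ml = bf B Bs for B :: "'v::real_vector \<Rightarrow> 'v \<Rightarrow> real" and Bs +
  fixes n :: nat and br :: "(nat \<Rightarrow> 'v) \<Rightarrow> 'v"
  assumes n2: "n \<ge> 2" and met: "metric_lie_nalg n br B"
begin

lemma nb: "nbracket n br" using met unfolding metric_lie_nalg_def lie_nalg_def by auto
lemma br_cong: "(\<And>i. i<n \<Longrightarrow> x i = y i) \<Longrightarrow> br x = br y" using nb unfolding nbracket_def by blast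
lemma br_lin: "i<n \<Longrightarrow> linear (\<lambda>v. br (x(i:=v)))" using nb unfolding nbracket_def by blast
lemma br_alt: "i<n \<Longrightarrow> j<n \<Longrightarrow> i\<noteq>j \<Longrightarrow> x i = x j \<Longrightarrow> br x = 0" using nb unfolding nbracket_def by blast
lemma skew: "B (ad n br x y) z = - B y (ad n br x z)" using met unfolding metric_lie_nalg_def by blast
lemma skew': "B (br (x(n-1:=y))) z = - B y (br (x(n-1:=z)))" using skew unfolding ad_def .

lemma br_swap: assumes "i<n" "j<n" "i\<noteq>j" shows "br (x(i := x j, j := x i)) = - br x"
proof -
  define f where "f a b = br (x(i:=a, j:=b))" for a b
  have l2: "linear (f a)" for a unfolding f_def using br_lin[OF assms(2), of "x(i:=a)"] by simp
  have l1: "linear (\<lambda>a. f a b)" for b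
  proof -
    have "(\<lambda>a. f a b) = (\<lambda>a. br ((x(j:=b))(i:=a)))" unfolding f_def using assms(3) by (simp add: fun_upd_twist)
    then show ?thesis using br_lin[OF assms(1)] by simp
  qed
  have fa1: "f (a + a') b = f a b + f a' b" for a a' b using linear_add[OF l1] by simp
  have fa2: "f a (b + b') = f a b + f a b'" for a b b' using linear_add[OF l2] by simp
  have z: "f c c = 0" for c unfolding f_def using br_alt[OF assms, of "x(i:=c,j:=c)"] assms(3) by simp
  have "0 = f (x i + x j) (x i + x j)" using z by simp
  also have "\<dots> = f (x i) (x i) + f (x i) (x j) + (f (x j) (x i) + f (x j) (x j))"
    by (simp add: fa1 fa2)
  also have "\<dots> = f (x i) (x j) + f (x j) (x i)" using z by simp
  finally have "f (x j) (x i) = - f (x i) (x j)" by (simp add: eq_neg_iff_add_eq_0 add.commute)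
  moreover have "f (x i) (x j) = br x" unfolding f_def by simp
  ultimately show ?thesis unfolding f_def by simp
qed

lemma ideal_sub: "lie_ideal n br J \<Longrightarrow> subspace J" unfolding lie_ideal_def by auto

lemma ideal_slot: assumes J: "lie_ideal n br J" and i: "i<n" "x i \<in> J" shows "br x \<in> J"
proof (cases "i = 0")
  case True then show ?thesis using J i unfolding lie_ideal_def by auto
next
  case False
  define y where "y = x(0 := x i, i := x 0)"
  have "y 0 = x i" using False by (simp add: y_def)
  then have "br y \<in> J" using J i unfolding lie_ideal_def by auto
  moreover have "y(0 := y i, i := y 0) = x" using False unfolding y_def by (auto simp: fun_eq_iff)
  moreover have "br (y(0 := y i, i := y 0)) = - br y" using br_swap[of 0 i y] i False n2 by auto
  ultimately show ?thesis using ideal_sub[OF J] by (metis subspace_neg)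
qed

lemma br_diff_ideal:
  assumes J: "lie_ideal n br J" and d: "\<And>i. i<n \<Longrightarrow> x i - y i \<in> J"
  shows "br x - br y \<in> J"
proof -
  have S: "subspace J" using ideal_sub[OF J] .
  define z where "z m = (\<lambda>i. if i < m then y i else x i)" for m
  have "m \<le> n \<Longrightarrow> br x - br (z m) \<in> J" for m
  proof (induction m)
    case 0
    have "z 0 = x" by (simp add: z_def)
    then show ?case using S by (simp add: subspace_0)
  next
    case (Suc m)
    then have m: "m < n" by simp
    define w where "w = z (Suc m)"
    have e1: "z m = w(m := x m)" unfolding w_def z_def by (auto simp: fun_eq_iff)
    have e2: "z (Suc m) = w(m := y m)" unfolding w_def z_def by (auto simp: fun_eq_iff)
    have "br (z m) - br (z (Suc m)) = br (w(m := x m - y m))"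
      unfolding e1 using e2 linear_diff[OF br_lin[OF m, of w]] by (simp add: w_def)
    also have "\<dots> \<in> J" using ideal_slot[OF J m, of "w(m := x m - y m)"] d[OF m] by simp
    finally have "br (z m) - br (z (Suc m)) \<in> J" .
    moreover have "br x - br (z m) \<in> J" using Suc by simp
    ultimately have "(br x - br (z m)) + (br (z m) - br (z (Suc m))) \<in> J"
      using S subspace_add by blast
    then show ?case by simp
  qed
  from this[of n] have "br x - br (z n) \<in> J" by simp
  moreover have "br (z n) = br y" by (rule br_cong) (simp add: z_def)
  ultimately show ?thesis by simp
qed

lemma perp_ideal: assumes J: "lie_ideal n br J" shows "lie_ideal n br (perp B J)"
  unfolding lie_ideal_def
proof (intro conjI allI impI)
  show "subspace (perp B J)" by (rule perp_subspace)
  fix x :: "nat \<Rightarrow> 'v" assume x0: "x 0 \<in> perp B J"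
  have n0: "n - 1 \<noteq> 0" "0 < n" "n - 1 < n" using n2 by auto
  define y where "y = x(0 := x (n-1), n-1 := x 0)"
  have yx: "y(0 := y (n-1), n-1 := y 0) = x" using n0 unfolding y_def by (auto simp: fun_eq_iff)
  have bx: "br x = - br y" using br_swap[of 0 "n-1" y] n0 yx by auto
  have yn: "y (n-1) = x 0" unfolding y_def by simp
  have "B (br x) w = 0" if w: "w \<in> J" for w
  proof -
    have "br y = br (y(n-1 := x 0))" using yn by (metis fun_upd_triv)
    then have "B (br y) w = - B (x 0) (br (y(n-1 := w)))" using skew' by simp
    moreover have "br (y(n-1 := w)) \<in> J" using ideal_slot[OF J n0(3)] w by simp
    ultimately show ?thesis using x0 w bx unfolding perp_def by simp
  qed
  then show "br x \<in> perp B J" unfolding perp_def by auto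
qed

lemma ideal_Int: "lie_ideal n br I \<Longrightarrow> lie_ideal n br J \<Longrightarrow> lie_ideal n br (I \<inter> J)"
  unfolding lie_ideal_def using subspace_inter by blast


lemma lie_br: "lie_nalg n br" using met unfolding metric_lie_nalg_def by auto
lemma ident: "ad n br x (br y) = (\<Sum>i<n. br (y(i := ad n br x (y i))))"
  using lie_br unfolding lie_nalg_def by blast

lemma minimal_exists:
  assumes J: "lie_ideal n br J" "J \<noteq> {0}"
  shows "\<exists>I. minimal_ideal n br I \<and> I \<subseteq> J"
proof -
  define P where "P k \<longleftrightarrow> (\<exists>I. lie_ideal n br I \<and> I \<noteq> {0} \<and> I \<subseteq> J \<and> dim I = k)" for k
  have "P (dim J)" using J by (auto simp: P_def)
  then have Pk: "P (LEAST k. P k)" by (rule LeastI)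
  then obtain I where I: "lie_ideal n br I" "I \<noteq> {0}" "I \<subseteq> J" "dim I = (LEAST k. P k)"
    unfolding P_def by blast
  have "minimal_ideal n br I" unfolding minimal_ideal_def
  proof (intro conjI allI impI I(1) I(2))
    fix K assume K: "lie_ideal n br K \<and> K \<subseteq> I"
    show "K = {0} \<or> K = I"
    proof (cases "K = {0}")
      case False
      then have "P (dim K)" using K I(3) unfolding P_def by blast
      then have "dim I \<le> dim K" using I(4) by (simp add: Least_le)
      then have "K = I" using fd.subspace_dim_equal[OF ideal_sub ideal_sub] K I(1) by blast
      then show ?thesis by simp
    qed simp
  qed
  then show ?thesis using I(3) by blast
qed

context
  fixes I assumes minI: "minimal_ideal n br I" and Inz: "I \<noteq> {0}" and InU: "I \<noteq> UNIV"
    and indec: "indecomposable n br B"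
begin

lemma I_ideal: "lie_ideal n br I" using minI unfolding minimal_ideal_def by auto
lemma I_sub: "subspace I" using ideal_sub[OF I_ideal] .
lemma P_ideal: "lie_ideal n br (perp B I)" using perp_ideal[OF I_ideal] .
lemma P_sub: "subspace (perp B I)" by (rule perp_subspace)
lemma PP: "perp B (perp B I) = I" using perp_perp[OF I_sub] .

lemma iso: "I \<subseteq> perp B I"
proof -
  have "lie_ideal n br (I \<inter> perp B I)" using ideal_Int[OF I_ideal P_ideal] .
  then have "I \<inter> perp B I = {0} \<or> I \<inter> perp B I = I" using minI unfolding minimal_ideal_def by blast
  moreover have "I \<inter> perp B I \<noteq> {0}"
  proof
    assume h: "I \<inter> perp B I = {0}"
    have "nondegenerate_on B I" unfolding nondegenerate_on_def
    proof (intro ballI impI)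
      fix x assume "x \<in> I" "\<forall>y\<in>I. B x y = 0"
      then have "x \<in> I \<inter> perp B I" unfolding perp_def by auto
      then show "x = 0" using h by auto
    qed
    then show False using indec I_ideal Inz InU unfolding indecomposable_def by blast
  qed
  ultimately show ?thesis by blast
qed

lemma br_aux: assumes "y 0 \<in> I" "y (n-1) \<in> perp B I" shows "br y = 0"
proof -
  have n0: "n - 1 \<noteq> 0" "0 < n" using n2 by auto
  have "B (br y) z = 0" for z
  proof -
    have "br y = br (y(n-1 := y (n-1)))" by simp
    then have "B (br y) z = - B (y (n-1)) (br (y(n-1 := z)))" using skew' by metis
    moreover have "br (y(n-1 := z)) \<in> I" using ideal_slot[OF I_ideal n0(2)] assms(1) n0 by simp
    ultimately show ?thesis using assms(2) unfolding perp_def by simp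
  qed
  then show ?thesis using Bnd by blast
qed

lemma br_II: assumes "x 0 \<in> I" "x 1 \<in> I" shows "br x = 0"
proof (cases "n - 1 = 1")
  case True then show ?thesis using br_aux[of x] assms iso by auto
next
  case False
  have n0: "n - 1 \<noteq> 0" "1 < n" "n - 1 < n" using n2 by auto
  define y where "y = x(1 := x (n-1), n-1 := x 1)"
  have yx: "y(1 := y (n-1), n-1 := y 1) = x" using False unfolding y_def by (auto simp: fun_eq_iff)
  have bx: "br x = - br y" using br_swap[of 1 "n-1" y] n0 yx False by auto
  have "y 0 = x 0" "y (n-1) = x 1" using n0 unfolding y_def by auto
  then have "br y = 0" using br_aux[of y] assms iso by auto
  then show ?thesis using bx by simp
qed

lemma P_maximal: "maximal_ideal n br (perp B I)"
  unfolding maximal_ideal_def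
proof (intro conjI allI impI P_ideal)
  show "perp B I \<noteq> UNIV"
  proof
    assume "perp B I = UNIV"
    then have "I = {0}" using PP perp_UNIV by simp
    then show False using Inz by simp
  qed
  fix J assume J: "lie_ideal n br J \<and> perp B I \<subseteq> J"
  have "perp B J \<subseteq> I" using perp_anti[of "perp B I" J] J PP by simp
  moreover have "lie_ideal n br (perp B J)" using perp_ideal J by blast
  ultimately have "perp B J = {0} \<or> perp B J = I" using minI unfolding minimal_ideal_def by blast
  moreover have "J = perp B (perp B J)" using perp_perp[OF ideal_sub] J by simp
  ultimately show "J = perp B I \<or> J = UNIV" using perp_zero by auto
qed

end

end

context ml begin
lemma exists_quot_br:
  fixes pi :: "'v \<Rightarrow> 'u::real_vector"
  assumes pi: "linear pi" and onto: "pi ` S = UNIV" and J: "lie_ideal n br J"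
    and kerJ: "\<And>v. v \<in> S \<Longrightarrow> pi v = 0 \<Longrightarrow> v \<in> J" and Jz: "\<And>v. v \<in> J \<Longrightarrow> pi v = 0"
    and S: "subspace S"
  shows "\<exists>brU. \<forall>x. (\<forall>i<n. x i \<in> S) \<longrightarrow> pi (br x) = brU (pi \<circ> x)"
proof -
  define L where "L u = (SOME v. v \<in> S \<and> pi v = u)" for u
  have L: "L u \<in> S \<and> pi (L u) = u" for u
  proof -
    have "\<exists>v. v \<in> S \<and> pi v = u" using onto by (metis UNIV_I imageE)
    then show ?thesis unfolding L_def by (rule someI_ex)
  qed
  have "pi (br x) = pi (br (L \<circ> (pi \<circ> x)))" if x: "\<forall>i<n. x i \<in> S" for x
  proof -
    have "br x - br (L \<circ> (pi \<circ> x)) \<in> J"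
    proof (rule br_diff_ideal[OF J])
      fix i assume i: "i < n"
      have "x i - L (pi (x i)) \<in> S" using x i L subspace_diff[OF S] by blast
      moreover have "pi (x i - L (pi (x i))) = 0" using L linear_diff[OF pi] by simp
      ultimately show "x i - (L \<circ> (pi \<circ> x)) i \<in> J" using kerJ by simp
    qed
    then have "pi (br x - br (L \<circ> (pi \<circ> x))) = 0" using Jz by blast
    then show ?thesis using linear_diff[OF pi] by simp
  qed
  then have "\<forall>x. (\<forall>i<n. x i \<in> S) \<longrightarrow> pi (br x) = (\<lambda>y. pi (br (L \<circ> y))) (pi \<circ> x)" by simp
  then show ?thesis by (rule exI[of _ "\<lambda>y. pi (br (L \<circ> y))"])
qed

lemma transfer_lie:
  fixes pi :: "'v \<Rightarrow> 'u::real_vector" and brU :: "(nat \<Rightarrow> 'u) \<Rightarrow> 'u"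
  assumes pi: "linear pi" and S: "subspace S" and onto: "pi ` S = UNIV"
    and cl: "\<And>x. (\<And>i. i<n \<Longrightarrow> x i \<in> S) \<Longrightarrow> br x \<in> S"
    and rel: "\<And>x. (\<And>i. i<n \<Longrightarrow> x i \<in> S) \<Longrightarrow> pi (br x) = brU (pi \<circ> x)"
  shows "lie_nalg n brU"
proof -
  define L where "L u = (SOME v. v \<in> S \<and> pi v = u)" for u
  have L: "L u \<in> S \<and> pi (L u) = u" for u
  proof -
    have "\<exists>v. v \<in> S \<and> pi v = u" using onto by (metis UNIV_I imageE)
    then show ?thesis unfolding L_def by (rule someI_ex)
  qed
  have LS: "L u \<in> S" and piL[simp]: "pi (L u) = u" for u using L by auto
  have key: "brU z = pi (br x)" if "\<And>i. x i \<in> S" "pi \<circ> x = z" for x z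
    using rel[of x] that by auto
  have LxS: "(L \<circ> x) j \<in> S" for x j using LS by simp
  have updS: "(X(k := v)) j \<in> S" if "\<And>j. X j \<in> S" "v \<in> S" for X k v j
    using that by simp
  have updpi: "pi \<circ> (X(k := v)) = (pi \<circ> X)(k := pi v)" for X k v by (simp add: fun_eq_iff)
  have piLx: "pi \<circ> (L \<circ> x) = x" for x by (simp add: fun_eq_iff)
  have keyL: "brU z = pi (br (L \<circ> z))" for z by (rule key[OF LxS piLx])
  have keyU: "brU (z(k := pi v)) = pi (br ((L \<circ> z)(k := v)))" if "v \<in> S" for z k v
  proof (rule key)
    show "((L \<circ> z)(k := v)) j \<in> S" for j using updS[OF LxS that] .
    show "pi \<circ> (L \<circ> z)(k := v) = z(k := pi v)" by (simp add: updpi piLx)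
  qed
  show ?thesis unfolding lie_nalg_def nbracket_def
  proof (intro conjI allI impI)
    fix x y :: "nat \<Rightarrow> 'u" assume "\<forall>i<n. x i = y i"
    then have "br (L \<circ> x) = br (L \<circ> y)" by (intro br_cong) auto
    then show "brU x = brU y" using keyL by metis
  next
    fix x :: "nat \<Rightarrow> 'u" and i assume i: "i < n"
    show "linear (\<lambda>v. brU (x(i := v)))"
    proof (rule linearI)
      fix a b
      have s1: "L a + L b \<in> S" using LS subspace_add[OF S] by blast
      have "brU (x(i := a + b)) = brU (x(i := pi (L a + L b)))" by (simp add: linear_add[OF pi])
      also have "\<dots> = pi (br ((L\<circ>x)(i := L a + L b)))" by (rule keyU[OF s1])
      also have "\<dots> = pi (br ((L\<circ>x)(i := L a))) + pi (br ((L\<circ>x)(i := L b)))"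
        using linear_add[OF br_lin[OF i, of "L\<circ>x"]] linear_add[OF pi] by simp
      also have "\<dots> = brU (x(i:=pi (L a))) + brU (x(i:=pi (L b)))" by (simp only: keyU[OF LS])
      finally show "brU (x(i := a + b)) = brU (x(i := a)) + brU (x(i := b))" by simp
    next
      fix c a
      have s1: "c *\<^sub>R L a \<in> S" using LS subspace_scale[OF S] by blast
      have "brU (x(i := c *\<^sub>R a)) = brU (x(i := pi (c *\<^sub>R L a)))" by (simp add: linear_scale[OF pi])
      also have "\<dots> = pi (br ((L\<circ>x)(i := c *\<^sub>R L a)))" by (rule keyU[OF s1])
      also have "\<dots> = c *\<^sub>R pi (br ((L\<circ>x)(i := L a)))"
        using linear_scale[OF br_lin[OF i, of "L\<circ>x"]] linear_scale[OF pi] by simp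
      also have "\<dots> = c *\<^sub>R brU (x(i:=pi (L a)))" by (simp only: keyU[OF LS])
      finally show "brU (x(i := c *\<^sub>R a)) = c *\<^sub>R brU (x(i := a))" by simp
    qed
  next
    fix x :: "nat \<Rightarrow> 'u" and i j assume h: "i < n \<and> j < n \<and> i \<noteq> j \<and> x i = x j"
    have "br (L \<circ> x) = 0" using br_alt[of i j "L \<circ> x"] h by auto
    then show "brU x = 0" using keyL linear_0[OF pi] by metis
  next
    fix x y :: "nat \<Rightarrow> 'u"
    define X where "X = L \<circ> x"
    define Y where "Y = L \<circ> y"
    have XS: "X j \<in> S" "Y j \<in> S" for j by (auto simp: X_def Y_def LS)
    have brYS: "br Y \<in> S" by (rule cl) (rule XS(2))
    have e1: "brU y = pi (br Y)" using keyL Y_def by simp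
    have adS: "ad n br X (Y i) \<in> S" for i unfolding ad_def by (rule cl) (rule updS[OF XS(1) XS(2)])
    have "ad n brU x (brU y) = brU (x(n-1 := pi (br Y)))" by (simp add: ad_def e1)
    also have "\<dots> = pi (br (X(n-1 := br Y)))" unfolding X_def by (rule keyU[OF brYS])
    also have "\<dots> = pi (ad n br X (br Y))" by (simp only: ad_def)
    also have "\<dots> = pi (\<Sum>i<n. br (Y(i := ad n br X (Y i))))" by (rule arg_cong[OF ident])
    also have "\<dots> = (\<Sum>i<n. pi (br (Y(i := ad n br X (Y i)))))" by (rule linear_sum[OF pi])
    also have "\<dots> = (\<Sum>i<n. brU (y(i := ad n brU x (y i))))"
    proof (rule sum.cong[OF refl])
      fix i assume "i \<in> {..<n}"
      have "ad n brU x (y i) = brU (x(n-1 := pi (Y i)))" by (simp add: ad_def Y_def)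
      also have "\<dots> = pi (ad n br X (Y i))" unfolding ad_def X_def by (rule keyU[OF XS(2)])
      finally have a: "ad n brU x (y i) = pi (ad n br X (Y i))" .
      show "pi (br (Y(i := ad n br X (Y i)))) = brU (y(i := ad n brU x (y i)))"
        unfolding a Y_def by (rule sym, rule keyU[OF adS[unfolded Y_def]])
    qed
    finally show "ad n brU x (brU y) = (\<Sum>i<n. brU (y(i := ad n brU x (y i))))" .
  qed
qed

lemma quotient_simple:
  fixes pi :: "'v \<Rightarrow> 'u::real_vector" and brU :: "(nat \<Rightarrow> 'u) \<Rightarrow> 'u"
  assumes pi: "linear pi" and sj: "surj pi" and ker: "{v. pi v = 0} = P"
    and maxP: "maximal_ideal n br P" and rel: "\<And>x. pi (br x) = brU (pi \<circ> x)"
  shows "simple_nalg n brU \<or> one_dim TYPE('u)"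
proof (cases "one_dim TYPE('u)")
  case False
  have "K = {0} \<or> K = UNIV" if K: "lie_ideal n brU K" for K
  proof -
    have KS: "subspace K" using K unfolding lie_ideal_def by auto
    define J where "J = {v. pi v \<in> K}"
    have "lie_ideal n br J" unfolding lie_ideal_def J_def
    proof (intro conjI allI impI)
      show "subspace {v. pi v \<in> K}" using linear_subspace_linear_preimage[OF pi KS] .
      fix x :: "nat \<Rightarrow> 'v" assume "x 0 \<in> {v. pi v \<in> K}"
      then have "(pi \<circ> x) 0 \<in> K" by simp
      then have "brU (pi \<circ> x) \<in> K" using K unfolding lie_ideal_def by blast
      then show "br x \<in> {v. pi v \<in> K}" using rel by simp
    qed
    moreover have "P \<subseteq> J" using ker subspace_0[OF KS] J_def by auto
    ultimately have "J = P \<or> J = UNIV" using maxP unfolding maximal_ideal_def by blast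
    then show ?thesis
    proof
      assume "J = P"
      have "k = 0" if k: "k \<in> K" for k
      proof -
        obtain v where v: "k = pi v" using sj by (metis surjD)
        then have "v \<in> J" using k J_def by simp
        then show "k = 0" using \<open>J = P\<close> ker v by auto
      qed
      then show ?thesis using subspace_0[OF KS] by auto
    next
      assume "J = UNIV"
      have "k \<in> K" for k
      proof -
        obtain v where v: "k = pi v" using sj by (metis surjD)
        then show "k \<in> K" using \<open>J = UNIV\<close> J_def by auto
      qed
      then show ?thesis by auto
    qed
  qed
  then show ?thesis using False unfolding simple_nalg_def by blast
qed simp

end

context ml begin
context
  fixes I assumes minI: "minimal_ideal n br I" and Inz: "I \<noteq> {0}" and InU: "I \<noteq> UNIV"
    and indec: "indecomposable n br B"
begin

lemma iso': "I \<subseteq> perp B I" using iso[OF minI Inz InU indec] .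
lemma I_ideal': "lie_ideal n br I" using I_ideal[OF minI Inz InU indec] .
lemma I_sub': "subspace I" using ideal_sub[OF I_ideal'] .
lemma P_ideal': "lie_ideal n br (perp B I)" using perp_ideal[OF I_ideal'] .
lemma PP': "perp B (perp B I) = I" using perp_perp[OF I_sub'] .
lemma P_max': "maximal_ideal n br (perp B I)" using P_maximal[OF minI Inz InU indec] .

lemma U_pair:
  fixes pi :: "'v \<Rightarrow> 'u::real_vector"
  assumes pi: "linear pi" "surj pi" "{v. pi v = 0} = perp B I"
  shows "\<exists>Pr. (\<forall>u w. w \<in> I \<longrightarrow> Pr (pi u) w = B u w) \<and> (\<forall>a. (\<forall>w\<in>I. Pr a w = 0) \<longrightarrow> a = 0)
           \<and> (\<forall>w\<in>I. (\<forall>a. Pr a w = 0) \<longrightarrow> w = 0)"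
proof -
  define L where "L a = (SOME v. pi v = a)" for a
  have L: "pi (L a) = a" for a
  proof -
    have "\<exists>v. pi v = a" using pi(2) by (metis surjD)
    then show ?thesis unfolding L_def by (rule someI_ex)
  qed
  define Pr where "Pr a w = B (L a) w" for a w
  have 1: "Pr (pi u) w = B u w" if "w \<in> I" for u w
  proof -
    have "pi (L (pi u) - u) = 0" using L linear_diff[OF pi(1)] by simp
    then have "L (pi u) - u \<in> perp B I" using pi(3) by blast
    then have "B (L (pi u) - u) w = 0" using that unfolding perp_def by blast
    then show ?thesis unfolding Pr_def by simp
  qed
  have 2: "a = 0" if "\<forall>w\<in>I. Pr a w = 0" for a
  proof -
    have "L a \<in> perp B I" using that unfolding perp_def Pr_def by blast
    then have "pi (L a) = 0" using pi(3) by blast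
    then show ?thesis using L by simp
  qed
  have 3: "w = 0" if "w \<in> I" "\<forall>a. Pr a w = 0" for w
  proof -
    have "B v w = 0" for v using 1[OF that(1), of v] that(2) by simp
    then have "B w v = 0" for v by (simp add: Bsym)
    then show ?thesis using Bnd by blast
  qed
  have "(\<forall>u w. w \<in> I \<longrightarrow> Pr (pi u) w = B u w) \<and> (\<forall>a. (\<forall>w\<in>I. Pr a w = 0) \<longrightarrow> a = 0)
           \<and> (\<forall>w\<in>I. (\<forall>a. Pr a w = 0) \<longrightarrow> w = 0)"
    using 1 2 3 by simp
  then show ?thesis by (rule exI[of _ Pr])
qed

lemma U_dim:
  fixes pi :: "'v \<Rightarrow> 'u::real_vector"
  assumes pi: "linear pi" "surj pi" "{v. pi v = 0} = perp B I"
  shows "dim I = dim (UNIV::'u set)"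
proof -
  have "dim (UNIV::'v set) = dim {x\<in>UNIV. pi x = 0} + dim (pi ` UNIV)"
    using rank_nullity[OF pi(1) subspace_UNIV] .
  moreover have "{x\<in>UNIV. pi x = 0} = perp B I" using pi(3) by simp
  moreover have "pi ` UNIV = UNIV" using pi(2) by simp
  ultimately show ?thesis using dim_perp[OF I_sub'] by simp
qed

lemma U_all:
  fixes pi :: "'v \<Rightarrow> 'u::real_vector"
  assumes pi: "linear pi" "surj pi" "{v. pi v = 0} = perp B I"
  shows "(\<exists>brU. \<forall>x. pi (br x) = brU (pi \<circ> x))
        \<and> (\<forall>brU. (\<forall>x. pi (br x) = brU (pi \<circ> x)) \<longrightarrow>
               lie_nalg n brU \<and> (simple_nalg n brU \<or> one_dim TYPE('u)))"
proof (intro conjI allI impI)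
  have "\<exists>brU. \<forall>x. (\<forall>i<n. x i \<in> UNIV) \<longrightarrow> pi (br x) = brU (pi \<circ> x)"
    by (rule exists_quot_br[OF pi(1) _ P_ideal']) (use pi in auto)
  then show "\<exists>brU. \<forall>x. pi (br x) = brU (pi \<circ> x)" by simp
next
  fix brU :: "(nat \<Rightarrow> 'u) \<Rightarrow> 'u" assume rel: "\<forall>x. pi (br x) = brU (pi \<circ> x)"
  show "lie_nalg n brU"
    by (rule transfer_lie[OF pi(1) subspace_UNIV]) (use pi rel in auto)
  show "simple_nalg n brU \<or> one_dim TYPE('u)"
    by (rule quotient_simple[OF pi P_max']) (use rel in auto)
qed

context
  fixes rho :: "'v \<Rightarrow> 'w::real_vector"
  assumes rho: "linear rho" and ronto: "rho ` perp B I = UNIV" and rker: "{v \<in> perp B I. rho v = 0} = I"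
begin

definition "Lr w = (SOME v. v \<in> perp B I \<and> rho v = w)"
lemma Lr: "Lr w \<in> perp B I" "rho (Lr w) = w"
proof -
  have "\<exists>v. v \<in> perp B I \<and> rho v = w" using ronto by (metis UNIV_I imageE)
  then have "Lr w \<in> perp B I \<and> rho (Lr w) = w" unfolding Lr_def by (rule someI_ex)
  then show "Lr w \<in> perp B I" "rho (Lr w) = w" by auto
qed

lemma rho_I: "v \<in> I \<Longrightarrow> rho v = 0" using rker by auto
lemma rho_ker: "v \<in> perp B I \<Longrightarrow> rho v = 0 \<Longrightarrow> v \<in> I" using rker by auto

lemma B_lift: assumes "a \<in> perp B I" "b \<in> perp B I" shows "B (Lr (rho a)) (Lr (rho b)) = B a b"
proof -
  have da: "a - Lr (rho a) \<in> I" using rho_ker[of "a - Lr (rho a)"] Lr assms subspace_diff[OF perp_subspace]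
    linear_diff[OF rho] by simp
  have db: "b - Lr (rho b) \<in> I" using rho_ker[of "b - Lr (rho b)"] Lr assms subspace_diff[OF perp_subspace]
    linear_diff[OF rho] by simp
  have "B b (a - Lr (rho a)) = 0" using da assms(2) unfolding perp_def by blast
  then have "B (a - Lr (rho a)) b = 0" by (metis Bsym)
  moreover have "B (Lr (rho a)) (b - Lr (rho b)) = 0" using db Lr(1) unfolding perp_def by blast
  ultimately show ?thesis by simp
qed

lemma W_exists:
  "\<exists>brW BW. (\<forall>x. (\<forall>i<n. x i \<in> perp B I) \<longrightarrow> rho (br x) = brW (rho \<circ> x))
                  \<and> (\<forall>a\<in>perp B I. \<forall>b\<in>perp B I. BW (rho a) (rho b) = B a b)"
proof -
  obtain brW where brW: "\<forall>x. (\<forall>i<n. x i \<in> perp B I) \<longrightarrow> rho (br x) = brW (rho \<circ> x)"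
    using exists_quot_br[OF rho ronto I_ideal' rho_ker rho_I perp_subspace] by blast
  have h2: "\<forall>a\<in>perp B I. \<forall>b\<in>perp B I. B (Lr (rho a)) (Lr (rho b)) = B a b"
    using B_lift by blast
  show ?thesis
    apply (rule exI[of _ brW])
    apply (rule exI[of _ "\<lambda>u v. B (Lr u) (Lr v)"])
    using brW h2 by simp
qed

lemma W_metric:
  assumes relW: "\<forall>x. (\<forall>i<n. x i \<in> perp B I) \<longrightarrow> rho (br x) = brW (rho \<circ> x)"
    and relB: "\<forall>a\<in>perp B I. \<forall>b\<in>perp B I. BW (rho a) (rho b) = B a b"
  shows "metric_lie_nalg n brW BW"
proof -
  have BWL: "BW u v = B (Lr u) (Lr v)" for u v
  proof -
    have "BW (rho (Lr u)) (rho (Lr v)) = B (Lr u) (Lr v)" using relB Lr(1) by blast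
    then show ?thesis by (simp add: Lr(2))
  qed
  have lie: "lie_nalg n brW"
  proof (rule transfer_lie[OF rho perp_subspace ronto])
    show "br x \<in> perp B I" if "\<And>i. i < n \<Longrightarrow> x i \<in> perp B I" for x
      using ideal_slot[OF P_ideal', of 0 x] that n2 by auto
    show "rho (br x) = brW (rho \<circ> x)" if "\<And>i. i < n \<Longrightarrow> x i \<in> perp B I" for x
      using relW that by blast
  qed
  have mf: "metric_form BW" unfolding metric_form_def
  proof (intro conjI allI impI)
    fix x y show "BW x y = BW y x" by (simp add: BWL Bsym)
  next
    fix u
    show "linear (BW u)"
    proof (rule linearI)
      fix v v'
      have s: "Lr v + Lr v' \<in> perp B I" using Lr subspace_add[OF perp_subspace] by blast
      have "BW u (v + v') = BW (rho (Lr u)) (rho (Lr v + Lr v'))" by (simp add: Lr linear_add[OF rho])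
      also have "\<dots> = B (Lr u) (Lr v + Lr v')" using relB s Lr by blast
      finally show "BW u (v + v') = BW u v + BW u v'" by (simp add: BWL)
    next
      fix c v
      have s: "c *\<^sub>R Lr v \<in> perp B I" using Lr subspace_scale[OF perp_subspace] by blast
      have "BW u (c *\<^sub>R v) = BW (rho (Lr u)) (rho (c *\<^sub>R Lr v))" by (simp add: Lr linear_scale[OF rho])
      also have "\<dots> = B (Lr u) (c *\<^sub>R Lr v)" using relB s Lr by blast
      finally show "BW u (c *\<^sub>R v) = c *\<^sub>R BW u v" by (simp add: BWL)
    qed
  next
    fix u assume h: "\<forall>y. BW u y = 0"
    have "B (Lr u) b = 0" if "b \<in> perp B I" for b
    proof -
      have "BW (rho (Lr u)) (rho b) = B (Lr u) b" using relB Lr that by blast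
      then show ?thesis using h by (simp add: Lr)
    qed
    then have "Lr u \<in> perp B (perp B I)" unfolding perp_def by blast
    then have "Lr u \<in> I" using PP' by simp
    then have "rho (Lr u) = 0" by (rule rho_I)
    then show "u = 0" using Lr by simp
  qed
  have skw: "BW (ad n brW x y) z = - BW y (ad n brW x z)" for x y z
  proof -
    define X where "X = Lr \<circ> x"
    have XS: "X j \<in> perp B I" for j using Lr X_def by simp
    have fam: "(X(n-1 := v)) j \<in> perp B I" if "v \<in> perp B I" for v j using XS that by simp
    have pf: "rho \<circ> X(n-1 := Lr v) = x(n-1 := v)" for v by (simp add: X_def fun_eq_iff Lr)
    have ad1: "ad n brW x v = rho (br (X(n-1 := Lr v)))" for v
    proof -
      have "rho (br (X(n-1 := Lr v))) = brW (rho \<circ> X(n-1 := Lr v))" using relW fam[OF Lr(1)] by blast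
      then show ?thesis using pf[of v] by (simp only: ad_def)
    qed
    have n0: "0 < n" using n2 by simp
    have brS: "br (X(n-1 := Lr v)) \<in> perp B I" for v
      by (rule ideal_slot[OF P_ideal' n0 fam[OF Lr(1)]])
    have "BW (ad n brW x y) z = BW (rho (br (X(n-1 := Lr y)))) (rho (Lr z))" by (simp add: ad1 Lr)
    also have "\<dots> = B (br (X(n-1 := Lr y))) (Lr z)" using relB brS Lr(1) by blast
    also have "\<dots> = - B (Lr y) (br (X(n-1 := Lr z)))" by (rule skew')
    also have "\<dots> = - BW (rho (Lr y)) (rho (br (X(n-1 := Lr z))))"
    proof -
      have "BW (rho (Lr y)) (rho (br (X(n-1 := Lr z)))) = B (Lr y) (br (X(n-1 := Lr z)))"
        using relB brS Lr(1) by blast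
      then show ?thesis by simp
    qed
    also have "\<dots> = - BW y (ad n brW x z)" by (simp add: ad1 Lr)
    finally show ?thesis .
  qed
  show ?thesis unfolding metric_lie_nalg_def by (intro conjI lie mf allI skw)
qed

end
end
end

lemma orth_basis_nz:
  fixes F :: "'a::real_vector \<Rightarrow> 'a \<Rightarrow> real"
  assumes mf: "metric_form F" and ind: "independent b" and sp: "span b = UNIV"
    and orth: "\<forall>x\<in>b. \<forall>y\<in>b. x\<noteq>y \<longrightarrow> F x y = 0" and x: "x \<in> b"
  shows "F x x \<noteq> 0"
proof
  assume h: "F x x = 0"
  have lin: "linear (F x)" using mf unfolding metric_form_def by auto
  have "F x y = 0" if "y \<in> b" for y using orth x that h by (cases "x = y") auto
  then have "F x y = 0" for y using linear_eq_0_on_span[OF lin, of b y] sp by auto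
  then have "x = 0" using mf unfolding metric_form_def by auto
  then show False using x ind dependent_zero by blast
qed

context bf begin

lemma orth_indep:
  assumes fin: "finite G" and orth: "\<And>x y. x\<in>G \<Longrightarrow> y\<in>G \<Longrightarrow> x\<noteq>y \<Longrightarrow> B x y = 0"
    and nz: "\<And>x. x\<in>G \<Longrightarrow> B x x \<noteq> 0"
  shows "independent G"
proof -
  have "u v = 0" if s: "(\<Sum>w\<in>G. u w *\<^sub>R w) = 0" and v: "v \<in> G" for u v
  proof -
    have "0 = B (\<Sum>w\<in>G. u w *\<^sub>R w) v" using s by simp
    also have "\<dots> = (\<Sum>w\<in>G. u w * B w v)" by (simp add: Bsum1)
    also have "\<dots> = u v * B v v + (\<Sum>w\<in>G-{v}. u w * B w v)" using sum.remove[OF fin v] .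
    also have "(\<Sum>w\<in>G-{v}. u w * B w v) = 0" by (rule sum.neutral) (use orth v in auto)
    finally have "u v * B v v = 0" by simp
    then show ?thesis using nz[OF v] by simp
  qed
  then show ?thesis using dependent_finite[OF fin] by blast
qed

end

context ml begin
context
  fixes I assumes minI: "minimal_ideal n br I" and Inz: "I \<noteq> {0}" and InU: "I \<noteq> UNIV"
    and indec: "indecomposable n br B"
begin

context
  fixes rho :: "'v \<Rightarrow> 'w::real_vector"
  assumes rho: "linear rho" and ronto: "rho ` perp B I = UNIV" and rker: "{v \<in> perp B I. rho v = 0} = I"
begin

lemma Lr': "Lr I rho w \<in> perp B I" "rho (Lr I rho w) = w" using Lr[OF minI Inz InU indec rho ronto rker] by auto
lemma rho_I': "v \<in> I \<Longrightarrow> rho v = 0" using rker by auto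
lemma rho_ker': "v \<in> perp B I \<Longrightarrow> rho v = 0 \<Longrightarrow> v \<in> I" using rker by auto
lemma iso'': "I \<subseteq> perp B I" using iso'[OF minI Inz InU indec] .

lemma signature:
  assumes relB: "\<forall>a\<in>perp B I. \<forall>b\<in>perp B I. BW (rho a) (rho b) = B a b"
    and mfW: "metric_form BW" and sig: "has_signature BW p q"
  shows "has_signature B (p + dim I) (q + dim I)"
proof -
  define L where "L = Lr I rho"
  have LP: "L w \<in> perp B I" and rL[simp]: "rho (L w) = w" for w using Lr' L_def by auto
  obtain bw where bw: "finite bw" "independent bw" "span bw = UNIV"
      "\<forall>x\<in>bw. \<forall>y\<in>bw. x \<noteq> y \<longrightarrow> BW x y = 0" "card {x\<in>bw. BW x x > 0} = p"
      "card {x\<in>bw. BW x x < 0} = q"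
    using sig unfolding has_signature_def by blast
  have bwnz: "BW x x \<noteq> 0" if "x \<in> bw" for x using orth_basis_nz[OF mfW bw(2) bw(3) bw(4) that] .
  have BL: "B (L a) (L b) = BW a b" for a b
  proof -
    have "BW (rho (L a)) (rho (L b)) = B (L a) (L b)" using relB LP by blast
    then show ?thesis by simp
  qed
  have bw0: "0 \<notin> bw" using bw(2) dependent_zero by blast
  define Lb where "Lb = L ` bw"
  have injL: "inj_on L bw" by (rule inj_onI) (metis rL)
  have LbP: "Lb \<subseteq> perp B I" using LP Lb_def by auto
  have finLb: "finite Lb" using bw(1) Lb_def by simp
  have cardLb: "card Lb = card bw" using card_image[OF injL] Lb_def by simp
  obtain E where E: "E \<subseteq> I" "independent E" "I \<subseteq> span E" "card E = dim I"
    using basis_exists by blast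
  have finE: "finite E" using fd.finiteI_independent[OF E(2)] .
  have EP: "E \<subseteq> perp B I" using E(1) iso'' by auto
  have disj: "E \<inter> Lb = {}"
  proof (rule ccontr)
    assume "E \<inter> Lb \<noteq> {}"
    then obtain x b where x: "x \<in> E" "b \<in> bw" "x = L b" using Lb_def by blast
    then have "x \<in> I" using E(1) by auto
    then have "rho x = 0" by (rule rho_I')
    moreover have "rho x = b" using x by simp
    ultimately show False using x(2) bw0 by simp
  qed
  have dimW: "dim (UNIV::'w set) = card bw" using basis_card_eq_dim[of bw UNIV] bw by simp
  have dimP: "dim (perp B I) = dim I + card bw"
  proof -
    have "dim (perp B I) = dim {x\<in>perp B I. rho x = 0} + dim (rho ` perp B I)"
      using rank_nullity[OF rho perp_subspace] .
    then show ?thesis using rker ronto dimW by simp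
  qed
  have cardEL: "card (E \<union> Lb) = dim (perp B I)"
    using card_Un_disjoint[OF finE finLb disj] E(4) cardLb dimP by simp
  have spanEL: "perp B I \<subseteq> span (E \<union> Lb)"
  proof
    fix v assume v: "v \<in> perp B I"
    have rLb: "rho ` Lb = bw" unfolding Lb_def by (auto simp: image_image)
    have "rho ` span Lb = span (rho ` Lb)" using linear_span_image[OF rho] by simp
    then have "rho v \<in> rho ` span Lb" using bw(3) rLb by simp
    then obtain u where u: "u \<in> span Lb" "rho u = rho v" by auto
    have uP: "u \<in> perp B I" using span_minimal[OF LbP perp_subspace] u(1) by blast
    have "v - u \<in> perp B I" using v uP subspace_diff[OF perp_subspace] by blast
    moreover have "rho (v - u) = 0" using u(2) linear_diff[OF rho] by simp
    ultimately have "v - u \<in> I" using rho_ker' by blast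
    then have "v - u \<in> span (E \<union> Lb)" using E(3) span_mono[of E "E \<union> Lb"] by blast
    moreover have "u \<in> span (E \<union> Lb)" using u(1) span_mono[of Lb "E \<union> Lb"] by blast
    ultimately have "(v - u) + u \<in> span (E \<union> Lb)" by (rule span_add)
    then show "v \<in> span (E \<union> Lb)" by simp
  qed
  have indEL: "independent (E \<union> Lb)"
    using fd.card_eq_dim[of "E \<union> Lb" "perp B I"] EP LbP cardEL finE finLb spanEL by auto
  have "\<forall>e. \<exists>v. \<forall>x\<in>E \<union> Lb. B v x = (if x = e then 1 else 0)"
  proof
    fix e show "\<exists>v. \<forall>x\<in>E \<union> Lb. B v x = (if x = e then 1 else 0)"
      using interp[OF indEL, of "\<lambda>x. if x = e then 1 else 0"] by simp
  qed
  from choice[OF this] obtain f0 where f0: "\<forall>e. \<forall>x\<in>E \<union> Lb. B (f0 e) x = (if x = e then 1 else 0)"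
    by blast
  define c where "c e e' = B (f0 e) (f0 e')" for e e'
  have csym: "c e e' = c e' e" for e e' unfolding c_def by (rule Bsym)
  define f where "f e = f0 e - (1/2) *\<^sub>R (\<Sum>e'\<in>E. c e e' *\<^sub>R e')" for e
  have BII: "B x y = 0" if "x \<in> I" "y \<in> perp B I" for x y
    using that unfolding perp_def by (metis (mono_tags, lifting) Bsym mem_Collect_eq)
  have Bf_left: "B (f e) y = B (f0 e) y - (1/2) * (\<Sum>e'\<in>E. c e e' * B e' y)" for e y
    unfolding f_def by (simp add: Bsum1)
  have sE0: "(\<Sum>e'\<in>E. c e e' * B e' y) = 0" if "y \<in> perp B I" for e y
    by (rule sum.neutral) (use BII E(1) that in auto)
  have fE: "B (f e) g = (if g = e then 1 else 0)" if "e \<in> E" "g \<in> E" for e g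
    using Bf_left[of e g] sE0[of g e] EP that f0 by auto
  have fE': "B g (f e) = (if g = e then 1 else 0)" if "e \<in> E" "g \<in> E" for e g
    using fE[OF that] Bsym by metis
  have fL: "B (f e) x = 0" if "e \<in> E" "x \<in> Lb" for e x
  proof -
    have "x \<noteq> e" using disj that by blast
    then show ?thesis using Bf_left[of e x] sE0[of x e] LbP that f0 by auto
  qed
  have ff: "B (f e) (f g) = 0" if e: "e \<in> E" and g: "g \<in> E" for e g
  proof -
    have s1: "(\<Sum>e'\<in>E. c g e' * B (f e) e') = c g e"
    proof -
      have "(\<Sum>e'\<in>E. c g e' * B (f e) e') = (\<Sum>e'\<in>E. if e' = e then c g e' else 0)"
        by (rule sum.cong) (auto simp: fE[OF e])
      also have "\<dots> = c g e" using e finE by (simp add: sum.delta)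
      finally show ?thesis .
    qed
    have s2: "(\<Sum>e'\<in>E. c e e' * B e' (f0 g)) = c e g"
    proof -
      have "(\<Sum>e'\<in>E. c e e' * B e' (f0 g)) = (\<Sum>e'\<in>E. if e' = g then c e e' else 0)"
        by (rule sum.cong) (auto simp: Bsym[of _ "f0 g"] f0)
      also have "\<dots> = c e g" using g finE by (simp add: sum.delta)
      finally show ?thesis .
    qed
    have "B (f e) (f g) = B (f e) (f0 g) - (1/2) * (\<Sum>e'\<in>E. c g e' * B (f e) e')"
      unfolding f_def[of g] by (simp add: Bsum2)
    also have "\<dots> = B (f0 e) (f0 g) - (1/2) * c e g - (1/2) * c g e"
      using s1 s2 Bf_left[of e "f0 g"] by simp
    also have "\<dots> = 0" using csym[of g e] unfolding c_def by simp
    finally show ?thesis .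
  qed
  have BEE: "B e g = 0" if "e \<in> E" "g \<in> E" for e g using BII E(1) EP that by blast
  have BLE: "B x e = 0" if "x \<in> Lb" "e \<in> E" for x e using BII[of e x] E(1) LbP that Bsym by (metis subsetD)
  have fL': "B x (f e) = 0" if "e \<in> E" "x \<in> Lb" for e x using fL[OF that] Bsym by metis
  have BLE': "B e x = 0" if "x \<in> Lb" "e \<in> E" for x e using BLE[OF that] Bsym by metis
  define gp where "gp e = e + f e" for e
  define gm where "gm e = e - f e" for e
  have tab:
    "B (gp e) (gp e) = 2" "B (gm e) (gm e) = -2" "B (gp e) (gm e) = 0" "B (gm e) (gp e) = 0"
    if "e \<in> E" for e
    using that by (simp_all add: gp_def gm_def fE fE' ff BEE)
  have tab2:
    "B (gp e) (gp g) = 0" "B (gm e) (gm g) = 0" "B (gp e) (gm g) = 0" "B (gm e) (gp g) = 0"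
    if "e \<in> E" "g \<in> E" "e \<noteq> g" for e g
    using that by (simp_all add: gp_def gm_def fE fE' ff BEE)
  have tab3:
    "B x (gp e) = 0" "B x (gm e) = 0" "B (gp e) x = 0" "B (gm e) x = 0"
    if "x \<in> Lb" "e \<in> E" for x e
    using that by (simp_all add: gp_def gm_def fL fL' BLE BLE')
  have tab4: "B x y = 0" if xL: "x \<in> Lb" and yL: "y \<in> Lb" and xy: "x \<noteq> y" for x y
  proof -
    obtain a b where "a \<in> bw" "b \<in> bw" "x = L a" "y = L b" using xL yL unfolding Lb_def by blast
    then show ?thesis using xy bw(4) BL by auto
  qed
  have tab5: "B (L b) (L b) = BW b b" for b using BL .
  define G where "G = Lb \<union> gp ` E \<union> gm ` E"
  have finG: "finite G" using finLb finE G_def by simp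
  have orthG: "B x y = 0" if xG: "x \<in> G" and yG: "y \<in> G" and xy: "x \<noteq> y" for x y
  proof -
    consider "x \<in> Lb" | e where "e \<in> E" "x = gp e" | e where "e \<in> E" "x = gm e"
      using xG G_def by blast
    then show ?thesis
    proof cases
      case 1
      consider "y \<in> Lb" | g where "g \<in> E" "y = gp g" | g where "g \<in> E" "y = gm g"
        using yG G_def by blast
      then show ?thesis by cases (use 1 xy tab3 tab4 in auto)
    next
      case 2
      consider "y \<in> Lb" | g where "g \<in> E" "y = gp g" | g where "g \<in> E" "y = gm g"
        using yG G_def by blast
      then show ?thesis
      proof cases
        case 1 then show ?thesis using 2 tab3 by auto
      next
        case (2 g) then show ?thesis using \<open>e \<in> E\<close> \<open>x = gp e\<close> xy tab2 by (cases "e = g") auto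
      next
        case (3 g) then show ?thesis using \<open>e \<in> E\<close> \<open>x = gp e\<close> tab tab2 by (cases "e = g") auto
      qed
    next
      case 3
      consider "y \<in> Lb" | g where "g \<in> E" "y = gp g" | g where "g \<in> E" "y = gm g"
        using yG G_def by blast
      then show ?thesis
      proof cases
        case 1 then show ?thesis using 3 tab3 by auto
      next
        case (2 g) then show ?thesis using \<open>e \<in> E\<close> \<open>x = gm e\<close> tab tab2 by (cases "e = g") auto
      next
        case (3 g) then show ?thesis using \<open>e \<in> E\<close> \<open>x = gm e\<close> xy tab2 by (cases "e = g") auto
      qed
    qed
  qed
  have nzG: "B x x \<noteq> 0" if xG: "x \<in> G" for x
  proof -
    consider "x \<in> Lb" | e where "e \<in> E" "x = gp e" | e where "e \<in> E" "x = gm e"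
      using xG G_def by blast
    then show ?thesis
    proof cases
      case 1 then show ?thesis using Lb_def tab5 bwnz by auto
    qed (use tab in auto)
  qed
  have indG: "independent G" using orth_indep[OF finG orthG nzG] by blast
  have injp: "inj_on gp E"
  proof (rule inj_onI)
    fix e g assume "e \<in> E" "g \<in> E" "gp e = gp g"
    then show "e = g" using tab(1)[of e] tab2(1)[of e g] by (cases "e = g") auto
  qed
  have injm: "inj_on gm E"
  proof (rule inj_onI)
    fix e g assume "e \<in> E" "g \<in> E" "gm e = gm g"
    then show "e = g" using tab(2)[of e] tab2(2)[of e g] by (cases "e = g") auto
  qed
  have d1: "gp ` E \<inter> gm ` E = {}"
  proof (rule ccontr)
    assume "gp ` E \<inter> gm ` E \<noteq> {}"
    then obtain e g where "e \<in> E" "g \<in> E" "gp e = gm g" by blast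
    then show False using tab(1)[of e] tab(3)[of e] tab2(3)[of e g] by (cases "e = g") auto
  qed
  have d2: "Lb \<inter> gp ` E = {}"
  proof (rule ccontr)
    assume "Lb \<inter> gp ` E \<noteq> {}"
    then obtain x e where "x \<in> Lb" "e \<in> E" "x = gp e" by blast
    then show False using tab(1)[of e] tab3(1)[of x e] by auto
  qed
  have d3: "Lb \<inter> gm ` E = {}"
  proof (rule ccontr)
    assume "Lb \<inter> gm ` E \<noteq> {}"
    then obtain x e where "x \<in> Lb" "e \<in> E" "x = gm e" by blast
    then show False using tab(2)[of e] tab3(2)[of x e] by auto
  qed
  have cp: "card (gp ` E) = dim I" using card_image[OF injp] E(4) by simp
  have cm: "card (gm ` E) = dim I" using card_image[OF injm] E(4) by simp
  have cardG: "card G = card bw + 2 * dim I"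
  proof -
    have "card G = card (Lb \<union> gp ` E) + card (gm ` E)"
      unfolding G_def by (rule card_Un_disjoint) (use finLb finE d1 d3 in auto)
    also have "card (Lb \<union> gp ` E) = card Lb + card (gp ` E)"
      by (rule card_Un_disjoint) (use finLb finE d2 in auto)
    finally show ?thesis using cardLb cp cm by simp
  qed
  have dimV: "dim (UNIV::'v set) = card bw + 2 * dim I"
    using dim_perp[OF I_sub'[OF minI Inz InU indec]] dimP by simp
  have spanG: "span G = UNIV"
    using fd.card_eq_dim[of G UNIV] finG cardG dimV indG by auto
  have pos: "{x\<in>G. B x x > 0} = L ` {b\<in>bw. BW b b > 0} \<union> gp ` E"
  proof -
    have "{x\<in>Lb. B x x > 0} = L ` {b\<in>bw. BW b b > 0}" using tab5 Lb_def by auto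
    moreover have "{x\<in>gp ` E. B x x > 0} = gp ` E" using tab by auto
    moreover have "{x\<in>gm ` E. B x x > 0} = {}" using tab by auto
    ultimately show ?thesis unfolding G_def by blast
  qed
  have neg: "{x\<in>G. B x x < 0} = L ` {b\<in>bw. BW b b < 0} \<union> gm ` E"
  proof -
    have "{x\<in>Lb. B x x < 0} = L ` {b\<in>bw. BW b b < 0}" using tab5 Lb_def by auto
    moreover have "{x\<in>gm ` E. B x x < 0} = gm ` E" using tab by auto
    moreover have "{x\<in>gp ` E. B x x < 0} = {}" using tab by auto
    ultimately show ?thesis unfolding G_def by blast
  qed
  have cpos: "card {x\<in>G. B x x > 0} = p + dim I"
  proof -
    have "card (L ` {b\<in>bw. BW b b > 0}) = p"
      using card_image[OF inj_on_subset[OF injL]] bw(5) by auto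
    moreover have "L ` {b\<in>bw. BW b b > 0} \<inter> gp ` E = {}" using d2 Lb_def by auto
    ultimately show ?thesis unfolding pos by (subst card_Un_disjoint) (use finE bw(1) cp in auto)
  qed
  have cneg: "card {x\<in>G. B x x < 0} = q + dim I"
  proof -
    have "card (L ` {b\<in>bw. BW b b < 0}) = q"
      using card_image[OF inj_on_subset[OF injL]] bw(6) by auto
    moreover have "L ` {b\<in>bw. BW b b < 0} \<inter> gm ` E = {}" using d3 Lb_def by auto
    ultimately show ?thesis unfolding neg by (subst card_Un_disjoint) (use finE bw(1) cm in auto)
  qed
  show ?thesis unfolding has_signature_def
    using finG indG spanG orthG cpos cneg by blast
qed

end
end
end

context bf begin

lemma posdef_span:
  assumes fin: "finite Q" and orth: "\<And>x y. x\<in>Q \<Longrightarrow> y\<in>Q \<Longrightarrow> x\<noteq>y \<Longrightarrow> B x y = 0"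
    and pos: "\<And>x. x\<in>Q \<Longrightarrow> B x x > 0"
    and x: "x \<in> span Q" and nz: "x \<noteq> 0"
  shows "B x x > 0"
proof -
  obtain u where u: "x = (\<Sum>q\<in>Q. u q *\<^sub>R q)" using x span_finite[OF fin] by auto
  have Bq: "B x q = u q * B q q" if q: "q \<in> Q" for q
  proof -
    have "B x q = (\<Sum>w\<in>Q. u w * B w q)" unfolding u by (simp add: Bsum1)
    also have "\<dots> = u q * B q q + (\<Sum>w\<in>Q-{q}. u w * B w q)" using sum.remove[OF fin q] .
    also have "(\<Sum>w\<in>Q-{q}. u w * B w q) = 0" by (rule sum.neutral) (use orth q in auto)
    finally show ?thesis by simp
  qed
  have "B x x = (\<Sum>q\<in>Q. u q * B x q)"
  proof -
    have "B x x = B x (\<Sum>q\<in>Q. u q *\<^sub>R q)" using u by simp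
    then show ?thesis by (simp add: Bsum2)
  qed
  also have "\<dots> = (\<Sum>q\<in>Q. (u q)^2 * B q q)"
    by (rule sum.cong[OF refl]) (simp add: Bq power2_eq_square)
  finally have e: "B x x = (\<Sum>q\<in>Q. (u q)^2 * B q q)" .
  have nn: "0 \<le> (u q)^2 * B q q" if "q \<in> Q" for q using pos[OF that] by simp
  show ?thesis
  proof (rule ccontr)
    assume "\<not> B x x > 0"
    moreover have "0 \<le> (\<Sum>q\<in>Q. (u q)^2 * B q q)" by (rule sum_nonneg) (rule nn)
    ultimately have "(\<Sum>q\<in>Q. (u q)^2 * B q q) = 0" using e by linarith
    moreover have "(\<Sum>q\<in>Q. (u q)^2 * B q q) = 0 \<longleftrightarrow> (\<forall>q\<in>Q. (u q)^2 * B q q = 0)"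
      by (rule sum_nonneg_eq_0_iff[OF fin]) (rule nn)
    ultimately have "\<forall>q\<in>Q. (u q)^2 * B q q = 0" by blast
    then have "\<forall>q\<in>Q. u q = 0" using pos by fastforce
    then have "x = 0" unfolding u by simp
    then show False using nz by simp
  qed
qed

end

context ml begin
context
  fixes I assumes minI: "minimal_ideal n br I" and Inz: "I \<noteq> {0}" and InU: "I \<noteq> UNIV"
    and indec: "indecomposable n br B"
begin

context
  fixes rho :: "'v \<Rightarrow> 'w::real_vector"
  assumes rho: "linear rho" and ronto: "rho ` perp B I = UNIV" and rker: "{v \<in> perp B I. rho v = 0} = I"
begin

lemma lorentz:
  assumes relB: "\<forall>a\<in>perp B I. \<forall>b\<in>perp B I. BW (rho a) (rho b) = B a b"
    and lor: "lorentzian B"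
  shows "dim I = 1 \<and> euclidean_form BW"
proof -
  have isoI: "I \<subseteq> perp B I" using iso''[OF minI Inz InU indec rho ronto rker] .
  have Isub: "subspace I" using I_sub'[OF minI Inz InU indec] .
  have LP: "Lr I rho w \<in> perp B I" and rL: "rho (Lr I rho w) = w" for w
    using Lr'[OF minI Inz InU indec rho ronto rker] by auto
  have rhoI: "v \<in> I \<Longrightarrow> rho v = 0" for v using rker by auto
  obtain p c where c: "finite c" "independent c" "span c = UNIV" "\<forall>x\<in>c. \<forall>y\<in>c. x\<noteq>y \<longrightarrow> B x y = 0"
     "card {x\<in>c. B x x > 0} = p" "card {x\<in>c. B x x < 0} = 1"
    using lor unfolding lorentzian_def has_signature_def by blast
  have cnz: "B x x \<noteq> 0" if "x \<in> c" for x using orth_basis_nz[OF mf c(2) c(3) c(4) that] .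
  define Q where "Q = {x\<in>c. B x x > 0}"
  have cQ: "c = Q \<union> {x\<in>c. B x x < 0}" using cnz unfolding Q_def by (auto simp: neq_iff)
  have cardc: "card c = card Q + 1"
  proof -
    have "card c = card Q + card {x\<in>c. B x x < 0}"
      by (subst cQ, rule card_Un_disjoint) (use c(1) Q_def in auto)
    then show ?thesis using c(6) by simp
  qed
  have dimV: "dim (UNIV::'v set) = card c" using basis_card_eq_dim[of c UNIV] c by simp
  have finQ: "finite Q" using c(1) Q_def by simp
  have indQ: "independent Q" using c(2) Q_def by (metis (no_types, lifting) independent_mono mem_Collect_eq subsetI)
  have dimN: "dim (span Q) = card Q" using dim_span_eq_card_independent[OF indQ] .
  have posN: "B x x > 0" if "x \<in> span Q" "x \<noteq> 0" for x
    by (rule posdef_span[OF finQ _ _ that]) (use c(4) Q_def in auto)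
  have BIx: "B x y = 0" if "x \<in> I" "y \<in> perp B I" for x y
    using that unfolding perp_def by (metis (mono_tags, lifting) Bsym mem_Collect_eq)
  have dimI1: "dim I \<le> 1"
  proof -
    have "I \<inter> span Q \<subseteq> {0}"
    proof
      fix x assume x: "x \<in> I \<inter> span Q"
      have "B x x = 0" using BIx x isoI by auto
      then show "x \<in> {0}" using posN x by force
    qed
    then have "dim (I \<inter> span Q) = 0" by simp
    moreover have "dim {x + y |x y. x \<in> I \<and> y \<in> span Q} + dim (I \<inter> span Q) = dim I + dim (span Q)"
      using fd.dim_sums_Int[OF Isub subspace_span] .
    moreover have "dim {x + y |x y. x \<in> I \<and> y \<in> span Q} \<le> dim (UNIV::'v set)"
      by (rule fd.dim_subset) simp
    ultimately show ?thesis using dimN dimV cardc by linarith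
  qed
  have dI0: "dim I \<noteq> 0" using Inz subspace_0[OF Isub] by auto
  have dI: "dim I = 1" using dimI1 dI0 by linarith
  obtain e where e: "e \<in> I" "e \<noteq> 0" using Inz subspace_0[OF Isub] by blast
  have eucl: "BW w w > 0" if w: "w \<noteq> 0" for w
  proof (rule ccontr)
    assume h: "\<not> BW w w > 0"
    define a where "a = Lr I rho w"
    have aP: "a \<in> perp B I" using LP a_def by simp
    have Baa: "B a a = BW w w"
    proof -
      have "BW (rho a) (rho a) = B a a" using relB aP by blast
      then show ?thesis using rL a_def by simp
    qed
    have aI: "a \<notin> I" using rhoI rL a_def w by metis
    have spe: "span {e} \<subseteq> I" using span_minimal[of "{e}" I] e Isub by auto
    have ind2: "independent {a, e}"
    proof -
      have "independent {e}" using e(2) by simp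
      moreover have "a \<notin> span {e}" using spe aI by blast
      ultimately show ?thesis using independent_insert by (metis insert_absorb singletonD)
    qed
    have ae: "a \<noteq> e" using aI e by blast
    have dS2: "dim (span {a, e}) = 2" using dim_span_eq_card_independent[OF ind2] ae by simp
    have "dim {x + y |x y. x \<in> span {a, e} \<and> y \<in> span Q} + dim (span {a, e} \<inter> span Q) = dim (span {a,e}) + dim (span Q)"
      using fd.dim_sums_Int[OF subspace_span subspace_span] .
    moreover have "dim {x + y |x y. x \<in> span {a, e} \<and> y \<in> span Q} \<le> dim (UNIV::'v set)"
      by (rule fd.dim_subset) simp
    ultimately have "dim (span {a, e} \<inter> span Q) \<noteq> 0" using dS2 dimN dimV cardc by linarith
    then obtain x where x: "x \<in> span {a, e}" "x \<in> span Q" "x \<noteq> 0" by (auto simp: subset_iff)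
    have "B x x > 0" using posN x by blast
    moreover have "B x x \<le> 0"
    proof -
      obtain k where k: "x - k *\<^sub>R a \<in> span {e}" using x(1) span_insert[of a "{e}"] by auto
      then obtain t where t: "x - k *\<^sub>R a = t *\<^sub>R e" using span_singleton[of e] by auto
      then have xe: "x = k *\<^sub>R a + t *\<^sub>R e" by (simp add: algebra_simps)
      have Bae: "B a e = 0" "B e a = 0" "B e e = 0" using BIx[of e a] BIx[of e e] e aP isoI Bsym by auto
      have "B x x = k * k * B a a" unfolding xe by (simp add: Bae algebra_simps)
      also have "\<dots> \<le> 0" using h Baa by (simp add: mult_nonneg_nonpos)
      finally show ?thesis .
    qed
    ultimately show False by simp
  qed
  show ?thesis using dI eucl unfolding euclidean_form_def by blast
qed

end
end
end
theorem mainTheorem8: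
  fixes n :: nat
    and br :: "(nat \<Rightarrow> 'v::real_vector) \<Rightarrow> 'v"
    and B :: "'v \<Rightarrow> 'v \<Rightarrow> real"
  assumes n2: "n \<ge> 2"
    and fin: "fin_dim_space TYPE('v)"
    and nonzero: "(UNIV::'v set) \<noteq> {0}"
    and metric: "metric_lie_nalg n br B"
    and indec: "indecomposable n br B"
    and not_simple: "\<not> simple_nalg n br"
    and not_1d: "\<not> one_dim TYPE('v)"
  shows "(\<exists>I. minimal_ideal n br I \<and> I \<noteq> {0} \<and> I \<noteq> UNIV) \<and>
    (\<forall>I. minimal_ideal n br I \<and> I \<noteq> {0} \<and> I \<noteq> UNIV \<longrightarrow>
       I \<subseteq> perp B I
     \<and> (\<forall>x. x 0 \<in> I \<and> x 1 \<in> I \<longrightarrow> br x = 0)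
     \<and> maximal_ideal n br (perp B I)
     \<and> (\<forall>(\<pi>::'v \<Rightarrow> 'u::real_vector). linear \<pi> \<and> surj \<pi> \<and> {v. \<pi> v = 0} = perp B I \<longrightarrow>
          (\<exists>brU. \<forall>x. \<pi> (br x) = brU (\<pi> \<circ> x))
        \<and> (\<forall>brU. (\<forall>x. \<pi> (br x) = brU (\<pi> \<circ> x)) \<longrightarrow>
               lie_nalg n brU \<and> (simple_nalg n brU \<or> one_dim TYPE('u)))
        \<and> (\<exists>P. (\<forall>u w. w \<in> I \<longrightarrow> P (\<pi> u) w = B u w)
               \<and> (\<forall>a. (\<forall>w\<in>I. P a w = 0) \<longrightarrow> a = 0)
               \<and> (\<forall>w\<in>I. (\<forall>a. P a w = 0) \<longrightarrow> w = 0))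
        \<and> dim I = dim (UNIV::'u set))
     \<and> (\<forall>(\<rho>::'v \<Rightarrow> 'w::real_vector). linear \<rho> \<and> \<rho> ` perp B I = UNIV \<and>
            {v \<in> perp B I. \<rho> v = 0} = I \<longrightarrow>
          (\<exists>brW BW. (\<forall>x. (\<forall>i<n. x i \<in> perp B I) \<longrightarrow> \<rho> (br x) = brW (\<rho> \<circ> x))
                  \<and> (\<forall>a\<in>perp B I. \<forall>b\<in>perp B I. BW (\<rho> a) (\<rho> b) = B a b))
        \<and> (\<forall>brW BW. (\<forall>x. (\<forall>i<n. x i \<in> perp B I) \<longrightarrow> \<rho> (br x) = brW (\<rho> \<circ> x))
                  \<and> (\<forall>a\<in>perp B I. \<forall>b\<in>perp B I. BW (\<rho> a) (\<rho> b) = B a b) \<longrightarrow>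
               metric_lie_nalg n brW BW
             \<and> (\<forall>p q. has_signature BW p q \<longrightarrow> has_signature B (p + dim I) (q + dim I))
             \<and> (lorentzian B \<longrightarrow> dim I = 1 \<and> euclidean_form BW))))"
proof -
  have mfB: "metric_form B" using metric unfolding metric_lie_nalg_def by auto
  obtain S :: "'v set" where S: "finite S" "span S = UNIV" using fin unfolding fin_dim_space_def by blast
  obtain Bs where Bs: "Bs \<subseteq> S" "independent Bs" "S \<subseteq> span Bs"
    using maximal_independent_subset[of S] by blast
  have spanBs: "span Bs = UNIV"
    using span_minimal[OF Bs(3) subspace_span] S(2) by auto
  have finBs: "finite Bs" using finite_subset[OF Bs(1) S(1)] .
  interpret ml B Bs n br by unfold_locales (use finBs Bs(2) spanBs mfB n2 metric in auto)
  have part1: "\<exists>I. minimal_ideal n br I \<and> I \<noteq> {0} \<and> I \<noteq> UNIV"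
  proof -
    obtain J where J: "lie_ideal n br J" "J \<noteq> {0}" "J \<noteq> UNIV"
      using not_simple not_1d unfolding simple_nalg_def by blast
    obtain I where I: "minimal_ideal n br I" "I \<subseteq> J" using minimal_exists[OF J(1) J(2)] by blast
    have "I \<noteq> {0}" using I(1) unfolding minimal_ideal_def by blast
    moreover have "I \<noteq> UNIV" using I(2) J(3) by blast
    ultimately show ?thesis using I(1) by blast
  qed
  show ?thesis
  proof (rule conjI[OF part1], intro allI impI)
    fix I assume hI: "minimal_ideal n br I \<and> I \<noteq> {0} \<and> I \<noteq> UNIV"
    then have minI: "minimal_ideal n br I" and Inz: "I \<noteq> {0}" and InU: "I \<noteq> UNIV" by auto
    have A1: "I \<subseteq> perp B I" using iso[OF minI Inz InU indec] .
    have A2: "\<forall>x. x 0 \<in> I \<and> x 1 \<in> I \<longrightarrow> br x = 0" using br_II[OF minI Inz InU indec] by blast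
    have A3: "maximal_ideal n br (perp B I)" using P_maximal[OF minI Inz InU indec] .
    have A4: "\<forall>(\<pi>::'v \<Rightarrow> 'u::real_vector). linear \<pi> \<and> surj \<pi> \<and> {v. \<pi> v = 0} = perp B I \<longrightarrow>
          (\<exists>brU. \<forall>x. \<pi> (br x) = brU (\<pi> \<circ> x))
        \<and> (\<forall>brU. (\<forall>x. \<pi> (br x) = brU (\<pi> \<circ> x)) \<longrightarrow>
               lie_nalg n brU \<and> (simple_nalg n brU \<or> one_dim TYPE('u)))
        \<and> (\<exists>P. (\<forall>u w. w \<in> I \<longrightarrow> P (\<pi> u) w = B u w)
               \<and> (\<forall>a. (\<forall>w\<in>I. P a w = 0) \<longrightarrow> a = 0)
               \<and> (\<forall>w\<in>I. (\<forall>a. P a w = 0) \<longrightarrow> w = 0))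
        \<and> dim I = dim (UNIV::'u set)"
    proof (intro allI impI)
      fix pi :: "'v \<Rightarrow> 'u" assume h: "linear pi \<and> surj pi \<and> {v. pi v = 0} = perp B I"
      then have h1: "linear pi" and h2: "surj pi" and h3: "{v. pi v = 0} = perp B I" by auto
      have U1: "(\<exists>brU. \<forall>x. pi (br x) = brU (pi \<circ> x))
        \<and> (\<forall>brU. (\<forall>x. pi (br x) = brU (pi \<circ> x)) \<longrightarrow>
               lie_nalg n brU \<and> (simple_nalg n brU \<or> one_dim TYPE('u)))"
        using U_all[OF minI Inz InU indec h1 h2 h3] .
      have U2: "\<exists>P. (\<forall>u w. w \<in> I \<longrightarrow> P (pi u) w = B u w)
               \<and> (\<forall>a. (\<forall>w\<in>I. P a w = 0) \<longrightarrow> a = 0)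
               \<and> (\<forall>w\<in>I. (\<forall>a. P a w = 0) \<longrightarrow> w = 0)"
        using U_pair[OF minI Inz InU indec h1 h2 h3] .
      have U3: "dim I = dim (UNIV::'u set)" using U_dim[OF minI Inz InU indec h1 h2 h3] .
      show "(\<exists>brU. \<forall>x. pi (br x) = brU (pi \<circ> x))
        \<and> (\<forall>brU. (\<forall>x. pi (br x) = brU (pi \<circ> x)) \<longrightarrow>
               lie_nalg n brU \<and> (simple_nalg n brU \<or> one_dim TYPE('u)))
        \<and> (\<exists>P. (\<forall>u w. w \<in> I \<longrightarrow> P (pi u) w = B u w)
               \<and> (\<forall>a. (\<forall>w\<in>I. P a w = 0) \<longrightarrow> a = 0)
               \<and> (\<forall>w\<in>I. (\<forall>a. P a w = 0) \<longrightarrow> w = 0))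
        \<and> dim I = dim (UNIV::'u set)"
        by (intro conjI conjunct1[OF U1] conjunct2[OF U1] U2 U3)
    qed
    have A5: "\<forall>(\<rho>::'v \<Rightarrow> 'w::real_vector). linear \<rho> \<and> \<rho> ` perp B I = UNIV \<and>
            {v \<in> perp B I. \<rho> v = 0} = I \<longrightarrow>
          (\<exists>brW BW. (\<forall>x. (\<forall>i<n. x i \<in> perp B I) \<longrightarrow> \<rho> (br x) = brW (\<rho> \<circ> x))
                  \<and> (\<forall>a\<in>perp B I. \<forall>b\<in>perp B I. BW (\<rho> a) (\<rho> b) = B a b))
        \<and> (\<forall>brW BW. (\<forall>x. (\<forall>i<n. x i \<in> perp B I) \<longrightarrow> \<rho> (br x) = brW (\<rho> \<circ> x))
                  \<and> (\<forall>a\<in>perp B I. \<forall>b\<in>perp B I. BW (\<rho> a) (\<rho> b) = B a b) \<longrightarrow>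
               metric_lie_nalg n brW BW
             \<and> (\<forall>p q. has_signature BW p q \<longrightarrow> has_signature B (p + dim I) (q + dim I))
             \<and> (lorentzian B \<longrightarrow> dim I = 1 \<and> euclidean_form BW))"
    proof (intro allI impI)
      fix rho :: "'v \<Rightarrow> 'w" assume h: "linear rho \<and> rho ` perp B I = UNIV \<and> {v \<in> perp B I. rho v = 0} = I"
      then have h1: "linear rho" and h2: "rho ` perp B I = UNIV" and h3: "{v \<in> perp B I. rho v = 0} = I"
        by auto
      have W1: "\<exists>brW BW. (\<forall>x. (\<forall>i<n. x i \<in> perp B I) \<longrightarrow> rho (br x) = brW (rho \<circ> x))
                  \<and> (\<forall>a\<in>perp B I. \<forall>b\<in>perp B I. BW (rho a) (rho b) = B a b)"
        using W_exists[OF minI Inz InU indec h1 h2 h3] .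
      have W2: "\<forall>brW BW. (\<forall>x. (\<forall>i<n. x i \<in> perp B I) \<longrightarrow> rho (br x) = brW (rho \<circ> x))
                  \<and> (\<forall>a\<in>perp B I. \<forall>b\<in>perp B I. BW (rho a) (rho b) = B a b) \<longrightarrow>
               metric_lie_nalg n brW BW
             \<and> (\<forall>p q. has_signature BW p q \<longrightarrow> has_signature B (p + dim I) (q + dim I))
             \<and> (lorentzian B \<longrightarrow> dim I = 1 \<and> euclidean_form BW)"
      proof (intro allI impI)
        fix brW BW assume r: "(\<forall>x. (\<forall>i<n. x i \<in> perp B I) \<longrightarrow> rho (br x) = brW (rho \<circ> x))
                  \<and> (\<forall>a\<in>perp B I. \<forall>b\<in>perp B I. BW (rho a) (rho b) = B a b)"
        then have r1: "\<forall>x. (\<forall>i<n. x i \<in> perp B I) \<longrightarrow> rho (br x) = brW (rho \<circ> x)"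
          and r2: "\<forall>a\<in>perp B I. \<forall>b\<in>perp B I. BW (rho a) (rho b) = B a b" by auto
        have m: "metric_lie_nalg n brW BW" using W_metric[OF minI Inz InU indec h1 h2 h3 r1 r2] .
        then have mfW: "metric_form BW" unfolding metric_lie_nalg_def by auto
        have s: "\<forall>p q. has_signature BW p q \<longrightarrow> has_signature B (p + dim I) (q + dim I)"
          using signature[OF minI Inz InU indec h1 h2 h3 r2 mfW] by blast
        have l: "lorentzian B \<longrightarrow> dim I = 1 \<and> euclidean_form BW"
          using lorentz[OF minI Inz InU indec h1 h2 h3 r2] by blast
        show "metric_lie_nalg n brW BW
             \<and> (\<forall>p q. has_signature BW p q \<longrightarrow> has_signature B (p + dim I) (q + dim I))
             \<and> (lorentzian B \<longrightarrow> dim I = 1 \<and> euclidean_form BW)" using m s l by blast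
      qed
      show "(\<exists>brW BW. (\<forall>x. (\<forall>i<n. x i \<in> perp B I) \<longrightarrow> rho (br x) = brW (rho \<circ> x))
                  \<and> (\<forall>a\<in>perp B I. \<forall>b\<in>perp B I. BW (rho a) (rho b) = B a b))
        \<and> (\<forall>brW BW. (\<forall>x. (\<forall>i<n. x i \<in> perp B I) \<longrightarrow> rho (br x) = brW (rho \<circ> x))
                  \<and> (\<forall>a\<in>perp B I. \<forall>b\<in>perp B I. BW (rho a) (rho b) = B a b) \<longrightarrow>
               metric_lie_nalg n brW BW
             \<and> (\<forall>p q. has_signature BW p q \<longrightarrow> has_signature B (p + dim I) (q + dim I))
             \<and> (lorentzian B \<longrightarrow> dim I = 1 \<and> euclidean_form BW))"
        by (rule conjI[OF W1 W2])
    qed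
    show "I \<subseteq> perp B I \<and> (\<forall>x. x 0 \<in> I \<and> x 1 \<in> I \<longrightarrow> br x = 0) \<and> maximal_ideal n br (perp B I) \<and>
      (\<forall>(\<pi>::'v \<Rightarrow> 'u::real_vector). linear \<pi> \<and> surj \<pi> \<and> {v. \<pi> v = 0} = perp B I \<longrightarrow>
          (\<exists>brU. \<forall>x. \<pi> (br x) = brU (\<pi> \<circ> x))
        \<and> (\<forall>brU. (\<forall>x. \<pi> (br x) = brU (\<pi> \<circ> x)) \<longrightarrow>
               lie_nalg n brU \<and> (simple_nalg n brU \<or> one_dim TYPE('u)))
        \<and> (\<exists>P. (\<forall>u w. w \<in> I \<longrightarrow> P (\<pi> u) w = B u w)
               \<and> (\<forall>a. (\<forall>w\<in>I. P a w = 0) \<longrightarrow> a = 0)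
               \<and> (\<forall>w\<in>I. (\<forall>a. P a w = 0) \<longrightarrow> w = 0))
        \<and> dim I = dim (UNIV::'u set))
     \<and> (\<forall>(\<rho>::'v \<Rightarrow> 'w::real_vector). linear \<rho> \<and> \<rho> ` perp B I = UNIV \<and>
            {v \<in> perp B I. \<rho> v = 0} = I \<longrightarrow>
          (\<exists>brW BW. (\<forall>x. (\<forall>i<n. x i \<in> perp B I) \<longrightarrow> \<rho> (br x) = brW (\<rho> \<circ> x))
                  \<and> (\<forall>a\<in>perp B I. \<forall>b\<in>perp B I. BW (\<rho> a) (\<rho> b) = B a b))
        \<and> (\<forall>brW BW. (\<forall>x. (\<forall>i<n. x i \<in> perp B I) \<longrightarrow> \<rho> (br x) = brW (\<rho> \<circ> x))
                  \<and> (\<forall>a\<in>perp B I. \<forall>b\<in>perp B I. BW (\<rho> a) (\<rho> b) = B a b) \<longrightarrow>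
               metric_lie_nalg n brW BW
             \<and> (\<forall>p q. has_signature BW p q \<longrightarrow> has_signature B (p + dim I) (q + dim I))
             \<and> (lorentzian B \<longrightarrow> dim I = 1 \<and> euclidean_form BW)))"
      by (intro conjI A1 A2 A3 A4 A5)
  qed
qed

end
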